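(* Let $M=M_1\oplus M_2$ be a right $R$-module which is a duo module (or a distributive module). Then $M$ is principally Goldie*-lifting if and only if both $M_1$ and $M_2$ are principally Goldie*-lifting.
   Context: $R$ is an associative ring with identity; modules are unital right $R$-modules. A submodule $N$ of $M$ is fully invariant if $f(N)\subseteq N$ for every $f\in\mathrm{End}(M)$; $M$ is a duo module if every submodule is fully invariant. $M$ is distributive if for all submodules $A,B,C$, $A+(B\cap C)=(A+B)\cap(A+C)$ (equivalently $A\cap(B+C)=(A\cap B)+(A\cap C)$). $K\ll N$ means $K$ is small in $N$. For submodules $X,Y$ of a module $N$, $X\,\beta^*\,Y$ in $N$ means $(X+Y)/X\ll N/X$ and $(X+Y)/Y\ll N/Y$. A module $N$ is principally Goldie*-lifting if for every cyclic submodule $X$ of $N$ there is a direct summand $D$ of $N$ with $X\,\beta^*\,D$ in $N$. *)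

theory Defs
  imports "HOL-Algebra.Algebra"
begin

(* We reuse the HOL-Algebra record type ('a,'m) module; the field smult r x
   is read as the right action  x . r . (HOL-Algebra's locale "module" requires
   a commutative ring, hence we state the axioms ourselves.) *)
definition rmodule :: "('a, 'c) ring_scheme \<Rightarrow> ('a, 'm) module \<Rightarrow> bool" where
  "rmodule R M \<longleftrightarrow> ring R \<and> abelian_group M \<and>
     (\<forall>r\<in>carrier R. \<forall>x\<in>carrier M. smult M r x \<in> carrier M) \<and>
     (\<forall>r\<in>carrier R. \<forall>x\<in>carrier M. \<forall>y\<in>carrier M.
         smult M r (x \<oplus>\<^bsub>M\<^esub> y) = smult M r x \<oplus>\<^bsub>M\<^esub> smult M r y) \<and>
     (\<forall>r\<in>carrier R. \<forall>s\<in>carrier R. \<forall>x\<in>carrier M.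
         smult M (r \<oplus>\<^bsub>R\<^esub> s) x = smult M r x \<oplus>\<^bsub>M\<^esub> smult M s x) \<and>
     (\<forall>r\<in>carrier R. \<forall>s\<in>carrier R. \<forall>x\<in>carrier M.
         smult M (r \<otimes>\<^bsub>R\<^esub> s) x = smult M s (smult M r x)) \<and>
     (\<forall>x\<in>carrier M. smult M \<one>\<^bsub>R\<^esub> x = x)"

definition submod :: "('a, 'c) ring_scheme \<Rightarrow> ('a, 'm) module \<Rightarrow> 'm set \<Rightarrow> bool" where
  "submod R N K \<longleftrightarrow> K \<subseteq> carrier N \<and> \<zero>\<^bsub>N\<^esub> \<in> K \<and>
     (\<forall>x\<in>K. \<forall>y\<in>K. x \<oplus>\<^bsub>N\<^esub> y \<in> K) \<and>
     (\<forall>x\<in>K. \<ominus>\<^bsub>N\<^esub> x \<in> K) \<and>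
     (\<forall>r\<in>carrier R. \<forall>x\<in>K. smult N r x \<in> K)"

abbreviation submodule_as_module :: "('a, 'm) module \<Rightarrow> 'm set \<Rightarrow> ('a, 'm) module" where
  "submodule_as_module M N \<equiv> M\<lparr>carrier := N\<rparr>"

definition End_mod :: "('a, 'c) ring_scheme \<Rightarrow> ('a, 'm) module \<Rightarrow> ('m \<Rightarrow> 'm) set" where
  "End_mod R M = {f. (\<forall>x\<in>carrier M. f x \<in> carrier M) \<and>
     (\<forall>x\<in>carrier M. \<forall>y\<in>carrier M. f (x \<oplus>\<^bsub>M\<^esub> y) = f x \<oplus>\<^bsub>M\<^esub> f y) \<and>
     (\<forall>r\<in>carrier R. \<forall>x\<in>carrier M. f (smult M r x) = smult M r (f x))}"

definition fully_invariant :: "('a, 'c) ring_scheme \<Rightarrow> ('a, 'm) module \<Rightarrow> 'm set \<Rightarrow> bool" where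
  "fully_invariant R M N \<longleftrightarrow> submod R M N \<and> (\<forall>f\<in>End_mod R M. f ` N \<subseteq> N)"

definition duo_module :: "('a, 'c) ring_scheme \<Rightarrow> ('a, 'm) module \<Rightarrow> bool" where
  "duo_module R M \<longleftrightarrow> (\<forall>N. submod R M N \<longrightarrow> fully_invariant R M N)"

definition distributive_module :: "('a, 'c) ring_scheme \<Rightarrow> ('a, 'm) module \<Rightarrow> bool" where
  "distributive_module R M \<longleftrightarrow> (\<forall>A B C. submod R M A \<longrightarrow> submod R M B \<longrightarrow> submod R M C \<longrightarrow>
      A <+>\<^bsub>M\<^esub> (B \<inter> C) = (A <+>\<^bsub>M\<^esub> B) \<inter> (A <+>\<^bsub>M\<^esub> C))"

definition small_in :: "('a, 'c) ring_scheme \<Rightarrow> ('a, 'm) module \<Rightarrow> 'm set \<Rightarrow> bool" where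
  "small_in R N K \<longleftrightarrow> submod R N K \<and>
     (\<forall>L. submod R N L \<longrightarrow> K <+>\<^bsub>N\<^esub> L = carrier N \<longrightarrow> L = carrier N)"

(* the quotient module N/A: carrier = cosets A +> a; (A +> a) . r = A +> (a . r) *)
definition quot_mod :: "('a, 'm) module \<Rightarrow> 'm set \<Rightarrow> ('a, 'm set) module" where
  "quot_mod N A = \<lparr> carrier = A_RCOSETS N A,
                    monoid.mult = undefined, one = undefined,
                    ring.zero = A, add = set_add N,
                    smult = (\<lambda>r C. set_add N A (smult N r ` C)) \<rparr>"

definition quot_image :: "('a, 'm) module \<Rightarrow> 'm set \<Rightarrow> 'm set \<Rightarrow> 'm set set" where
  "quot_image N A K = (\<lambda>a. a_r_coset N A a) ` K"

definition beta_star :: "('a, 'c) ring_scheme \<Rightarrow> ('a, 'm) module \<Rightarrow> 'm set \<Rightarrow> 'm set \<Rightarrow> bool" where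
  "beta_star R N A B \<longleftrightarrow>
     small_in R (quot_mod N A) (quot_image N A (A <+>\<^bsub>N\<^esub> B)) \<and>
     small_in R (quot_mod N B) (quot_image N B (A <+>\<^bsub>N\<^esub> B))"

definition direct_summand :: "('a, 'c) ring_scheme \<Rightarrow> ('a, 'm) module \<Rightarrow> 'm set \<Rightarrow> bool" where
  "direct_summand R N D \<longleftrightarrow> submod R N D \<and>
     (\<exists>D'. submod R N D' \<and> D <+>\<^bsub>N\<^esub> D' = carrier N \<and> D \<inter> D' = {\<zero>\<^bsub>N\<^esub>})"

definition cyclic_sub :: "('a, 'c) ring_scheme \<Rightarrow> ('a, 'm) module \<Rightarrow> 'm \<Rightarrow> 'm set" where
  "cyclic_sub R N x = {smult N r x | r. r \<in> carrier R}"

definition principally_goldie_star_lifting :: "('a, 'c) ring_scheme \<Rightarrow> ('a, 'm) module \<Rightarrow> bool" where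
  "principally_goldie_star_lifting R N \<longleftrightarrow>
     (\<forall>x\<in>carrier N. \<exists>D. direct_summand R N D \<and> beta_star R N (cyclic_sub R N x) D)"

end

theory Submission
  imports Defs
begin

lemma set_add_mem: "x \<in> A <+>\<^bsub>G\<^esub> B \<longleftrightarrow> (\<exists>a\<in>A. \<exists>b\<in>B. x = a \<oplus>\<^bsub>G\<^esub> b)"
  by (auto simp: set_add_def set_mult_def)

lemma set_add_memI: "a \<in> A \<Longrightarrow> b \<in> B \<Longrightarrow> x = a \<oplus>\<^bsub>G\<^esub> b \<Longrightarrow> x \<in> A <+>\<^bsub>G\<^esub> B"
  by (auto simp: set_add_mem)

lemma rcos_mem: "x \<in> A +>\<^bsub>G\<^esub> a \<longleftrightarrow> (\<exists>h\<in>A. x = h \<oplus>\<^bsub>G\<^esub> a)"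
  by (auto simp: a_r_coset_def r_coset_def)

lemma rcosets_mem: "C \<in> a_rcosets\<^bsub>G\<^esub> A \<longleftrightarrow> (\<exists>a\<in>carrier G. C = A +>\<^bsub>G\<^esub> a)"
  by (auto simp: A_RCOSETS_def RCOSETS_def a_r_coset_def)

lemma rmoduleD:
  assumes "rmodule R N"
  shows "ring R" "abelian_group N"
    "\<And>r x. r \<in> carrier R \<Longrightarrow> x \<in> carrier N \<Longrightarrow> smult N r x \<in> carrier N"
    "\<And>r x y. r \<in> carrier R \<Longrightarrow> x \<in> carrier N \<Longrightarrow> y \<in> carrier N \<Longrightarrow>
         smult N r (x \<oplus>\<^bsub>N\<^esub> y) = smult N r x \<oplus>\<^bsub>N\<^esub> smult N r y"
    "\<And>r s x. r \<in> carrier R \<Longrightarrow> s \<in> carrier R \<Longrightarrow> x \<in> carrier N \<Longrightarrow>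
         smult N (r \<oplus>\<^bsub>R\<^esub> s) x = smult N r x \<oplus>\<^bsub>N\<^esub> smult N s x"
    "\<And>r s x. r \<in> carrier R \<Longrightarrow> s \<in> carrier R \<Longrightarrow> x \<in> carrier N \<Longrightarrow>
         smult N (r \<otimes>\<^bsub>R\<^esub> s) x = smult N s (smult N r x)"
    "\<And>x. x \<in> carrier N \<Longrightarrow> smult N \<one>\<^bsub>R\<^esub> x = x"
  using assms unfolding rmodule_def by auto

lemma submodD:
  assumes "submod R N K"
  shows "K \<subseteq> carrier N" "\<zero>\<^bsub>N\<^esub> \<in> K"
    "\<And>x y. x \<in> K \<Longrightarrow> y \<in> K \<Longrightarrow> x \<oplus>\<^bsub>N\<^esub> y \<in> K"
    "\<And>x. x \<in> K \<Longrightarrow> \<ominus>\<^bsub>N\<^esub> x \<in> K"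
    "\<And>r x. r \<in> carrier R \<Longrightarrow> x \<in> K \<Longrightarrow> smult N r x \<in> K"
  using assms unfolding submod_def by auto

context abelian_group begin
lemma ag1: "h \<in> carrier G \<Longrightarrow> b \<in> carrier G \<Longrightarrow> h \<oplus> b \<oplus> \<ominus> b = h"
  by (simp add: a_assoc r_neg)
lemma ag2: "h \<in> carrier G \<Longrightarrow> a \<in> carrier G \<Longrightarrow> b \<in> carrier G \<Longrightarrow> (h \<oplus> (a \<oplus> \<ominus> b)) \<oplus> b = h \<oplus> a"
  by (simp add: a_assoc l_neg)
lemma ag6: "a \<in> carrier G \<Longrightarrow> b \<in> carrier G \<Longrightarrow> \<ominus> (a \<oplus> b) = \<ominus> a \<oplus> \<ominus> b"
  by (metis a_comm add.inv_mult_group)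
lemma ag3: "h \<in> carrier G \<Longrightarrow> a \<in> carrier G \<Longrightarrow> b \<in> carrier G \<Longrightarrow> (h \<oplus> \<ominus> (a \<oplus> \<ominus> b)) \<oplus> a = h \<oplus> b"
proof -
  assume c: "h \<in> carrier G" "a \<in> carrier G" "b \<in> carrier G"
  have "(h \<oplus> \<ominus> (a \<oplus> \<ominus> b)) \<oplus> a = h \<oplus> (\<ominus> a \<oplus> (a \<oplus> b))"
    using c by (simp add: ag6 minus_minus a_assoc a_comm[of b a])
  also have "\<dots> = h \<oplus> b" using c by (simp add: r_neg1)
  finally show ?thesis .
qed
lemma ag4: "h \<in> carrier G \<Longrightarrow> a \<in> carrier G \<Longrightarrow> b \<in> carrier G \<Longrightarrow> k \<in> carrier G \<Longrightarrow> (h \<oplus> a) \<oplus> (k \<oplus> b) = (h \<oplus> k) \<oplus> (a \<oplus> b)"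
  by (metis a_comm a_lcomm a_closed a_assoc)
lemma ag5: "b \<in> carrier G \<Longrightarrow> a \<in> carrier G \<Longrightarrow> b \<oplus> \<ominus> (\<ominus> a) = a \<oplus> b"
  using a_comm by simp
lemma ag7: "a \<in> carrier G \<Longrightarrow> a \<oplus> \<ominus> \<zero> = a"
  by simp
end

context
  fixes R :: "('a, 'c) ring_scheme" and N :: "('a, 'm) module"
  assumes rm: "rmodule R N"
begin

interpretation G: abelian_group N using rmoduleD(2)[OF rm] .

lemma sub_carr: "submod R N A \<Longrightarrow> x \<in> A \<Longrightarrow> x \<in> carrier N"
  using submodD(1) by blast

lemma sub_minus: "submod R N K \<Longrightarrow> x \<in> K \<Longrightarrow> y \<in> K \<Longrightarrow> x \<ominus>\<^bsub>N\<^esub> y \<in> K"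
  by (simp add: a_minus_def submodD)

lemma cos_self: "submod R N A \<Longrightarrow> a \<in> carrier N \<Longrightarrow> a \<in> A +>\<^bsub>N\<^esub> a"
  by (force simp: rcos_mem dest: submodD)

lemma cos_sub: "submod R N A \<Longrightarrow> a \<in> carrier N \<Longrightarrow> A +>\<^bsub>N\<^esub> a \<subseteq> carrier N"
  using sub_carr by (auto simp: rcos_mem)

lemma cos_eq: assumes "submod R N A" "a \<in> carrier N" "b \<in> carrier N"
  shows "(A +>\<^bsub>N\<^esub> a = A +>\<^bsub>N\<^esub> b) \<longleftrightarrow> a \<ominus>\<^bsub>N\<^esub> b \<in> A"
proof
  assume "A +>\<^bsub>N\<^esub> a = A +>\<^bsub>N\<^esub> b"
  with cos_self[OF assms(1,2)] obtain h where h: "h \<in> A" "a = h \<oplus>\<^bsub>N\<^esub> b" by (auto simp: rcos_mem)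
  have "h \<in> carrier N" using h submodD(1)[OF assms(1)] by auto
  then have "a \<ominus>\<^bsub>N\<^esub> b = h" using h assms by (simp add: a_minus_def G.ag1)
  with h show "a \<ominus>\<^bsub>N\<^esub> b \<in> A" by simp
next
  assume d: "a \<ominus>\<^bsub>N\<^esub> b \<in> A"
  have Ac: "A \<subseteq> carrier N" using submodD(1)[OF assms(1)] .
  show "A +>\<^bsub>N\<^esub> a = A +>\<^bsub>N\<^esub> b"
  proof (rule Set.set_eqI, rule iffI)
    fix x assume "x \<in> A +>\<^bsub>N\<^esub> a"
    then obtain h where h: "h \<in> A" "x = h \<oplus>\<^bsub>N\<^esub> a" by (auto simp: rcos_mem)
    have hc: "h \<in> carrier N" using h Ac by auto
    have "x = (h \<oplus>\<^bsub>N\<^esub> (a \<ominus>\<^bsub>N\<^esub> b)) \<oplus>\<^bsub>N\<^esub> b"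
      using h hc assms by (simp add: a_minus_def G.ag2)
    moreover have "h \<oplus>\<^bsub>N\<^esub> (a \<ominus>\<^bsub>N\<^esub> b) \<in> A" using submodD(3)[OF assms(1) h(1) d] .
    ultimately show "x \<in> A +>\<^bsub>N\<^esub> b" by (auto simp: rcos_mem)
  next
    fix x assume "x \<in> A +>\<^bsub>N\<^esub> b"
    then obtain h where h: "h \<in> A" "x = h \<oplus>\<^bsub>N\<^esub> b" by (auto simp: rcos_mem)
    have hc: "h \<in> carrier N" using h Ac by auto
    have "x = (h \<ominus>\<^bsub>N\<^esub> (a \<ominus>\<^bsub>N\<^esub> b)) \<oplus>\<^bsub>N\<^esub> a"
      using h hc assms by (simp add: a_minus_def G.ag3)
    moreover have "h \<ominus>\<^bsub>N\<^esub> (a \<ominus>\<^bsub>N\<^esub> b) \<in> A" using sub_minus[OF assms(1) h(1) d] .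
    ultimately show "x \<in> A +>\<^bsub>N\<^esub> a" by (auto simp: rcos_mem)
  qed
qed

lemma cos_zero: assumes "submod R N A" shows "A +>\<^bsub>N\<^esub> \<zero>\<^bsub>N\<^esub> = A"
proof -
  have "\<forall>h\<in>A. h \<oplus>\<^bsub>N\<^esub> \<zero>\<^bsub>N\<^esub> = h" using sub_carr[OF assms] by simp
  then show ?thesis by (auto simp: rcos_mem)
qed

lemma cos_in_A: assumes "submod R N A" "a \<in> carrier N"
  shows "(A +>\<^bsub>N\<^esub> a = A) \<longleftrightarrow> a \<in> A"
  using cos_eq[OF assms G.zero_closed] cos_zero[OF assms(1)] assms(2)
  by (simp add: a_minus_def G.ag7)

lemma cos_sum: assumes "submod R N A" "a \<in> carrier N" "b \<in> carrier N"
  shows "(A +>\<^bsub>N\<^esub> a) <+>\<^bsub>N\<^esub> (A +>\<^bsub>N\<^esub> b) = A +>\<^bsub>N\<^esub> (a \<oplus>\<^bsub>N\<^esub> b)"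
proof (rule Set.set_eqI, rule iffI)
  fix x assume "x \<in> (A +>\<^bsub>N\<^esub> a) <+>\<^bsub>N\<^esub> (A +>\<^bsub>N\<^esub> b)"
  then obtain h k where hk: "h \<in> A" "k \<in> A" "x = (h \<oplus>\<^bsub>N\<^esub> a) \<oplus>\<^bsub>N\<^esub> (k \<oplus>\<^bsub>N\<^esub> b)"
    by (auto simp: set_add_mem rcos_mem)
  then have "x = (h \<oplus>\<^bsub>N\<^esub> k) \<oplus>\<^bsub>N\<^esub> (a \<oplus>\<^bsub>N\<^esub> b)"
    using assms by (simp add: G.ag4 sub_carr)
  moreover have "h \<oplus>\<^bsub>N\<^esub> k \<in> A" using hk submodD(3)[OF assms(1)] by auto
  ultimately show "x \<in> A +>\<^bsub>N\<^esub> (a \<oplus>\<^bsub>N\<^esub> b)" by (auto simp: rcos_mem)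
next
  fix x assume "x \<in> A +>\<^bsub>N\<^esub> (a \<oplus>\<^bsub>N\<^esub> b)"
  then obtain h where h: "h \<in> A" "x = h \<oplus>\<^bsub>N\<^esub> (a \<oplus>\<^bsub>N\<^esub> b)" by (auto simp: rcos_mem)
  then have "x = (h \<oplus>\<^bsub>N\<^esub> a) \<oplus>\<^bsub>N\<^esub> (\<zero>\<^bsub>N\<^esub> \<oplus>\<^bsub>N\<^esub> b)"
    using assms by (simp add: G.a_assoc sub_carr)
  moreover have "h \<oplus>\<^bsub>N\<^esub> a \<in> A +>\<^bsub>N\<^esub> a" using h by (auto simp: rcos_mem)
  moreover have "\<zero>\<^bsub>N\<^esub> \<oplus>\<^bsub>N\<^esub> b \<in> A +>\<^bsub>N\<^esub> b" using submodD(2)[OF assms(1)] by (auto simp: rcos_mem)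
  ultimately show "x \<in> (A +>\<^bsub>N\<^esub> a) <+>\<^bsub>N\<^esub> (A +>\<^bsub>N\<^esub> b)"
    unfolding set_add_mem by blast
qed

lemma cos_smult: assumes "submod R N A" "r \<in> carrier R" "a \<in> carrier N"
  shows "A <+>\<^bsub>N\<^esub> (smult N r ` (A +>\<^bsub>N\<^esub> a)) = A +>\<^bsub>N\<^esub> smult N r a"
proof (rule Set.set_eqI, rule iffI)
  fix x assume "x \<in> A <+>\<^bsub>N\<^esub> (smult N r ` (A +>\<^bsub>N\<^esub> a))"
  then obtain h k where hk: "h \<in> A" "k \<in> A" "x = h \<oplus>\<^bsub>N\<^esub> smult N r (k \<oplus>\<^bsub>N\<^esub> a)"
    by (auto simp: set_add_mem rcos_mem)
  have kc: "k \<in> carrier N" "h \<in> carrier N" using hk sub_carr[OF assms(1)] by auto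
  have "x = (h \<oplus>\<^bsub>N\<^esub> smult N r k) \<oplus>\<^bsub>N\<^esub> smult N r a"
    using hk kc assms by (simp add: rmoduleD(4)[OF rm] rmoduleD(3)[OF rm] G.a_assoc)
  moreover have "h \<oplus>\<^bsub>N\<^esub> smult N r k \<in> A" using hk submodD(3,5)[OF assms(1)] assms(2) by auto
  ultimately show "x \<in> A +>\<^bsub>N\<^esub> smult N r a" by (auto simp: rcos_mem)
next
  fix x assume "x \<in> A +>\<^bsub>N\<^esub> smult N r a"
  then obtain h where h: "h \<in> A" "x = h \<oplus>\<^bsub>N\<^esub> smult N r a" by (auto simp: rcos_mem)
  have "smult N r a = smult N r (\<zero>\<^bsub>N\<^esub> \<oplus>\<^bsub>N\<^esub> a)" using assms by simp
  moreover have "\<zero>\<^bsub>N\<^esub> \<oplus>\<^bsub>N\<^esub> a \<in> A +>\<^bsub>N\<^esub> a" using submodD(2)[OF assms(1)] by (auto simp: rcos_mem)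
  ultimately show "x \<in> A <+>\<^bsub>N\<^esub> (smult N r ` (A +>\<^bsub>N\<^esub> a))"
    using h by (auto simp: set_add_mem)
qed

lemma Q_simps:
  "carrier (quot_mod N A) = a_rcosets\<^bsub>N\<^esub> A"
  "add (quot_mod N A) = set_add N"
  "ring.zero (quot_mod N A) = A"
  "smult (quot_mod N A) r C = A <+>\<^bsub>N\<^esub> (smult N r ` C)"
  by (simp_all add: quot_mod_def)

lemma Q_inv: assumes "submod R N A" "a \<in> carrier N"
  shows "\<ominus>\<^bsub>quot_mod N A\<^esub> (A +>\<^bsub>N\<^esub> a) = A +>\<^bsub>N\<^esub> \<ominus>\<^bsub>N\<^esub> a"
proof -
  have "\<ominus>\<^bsub>quot_mod N A\<^esub> (A +>\<^bsub>N\<^esub> a) = (THE y. y \<in> a_rcosets\<^bsub>N\<^esub> A \<and>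
    (A +>\<^bsub>N\<^esub> a) <+>\<^bsub>N\<^esub> y = A \<and> y <+>\<^bsub>N\<^esub> (A +>\<^bsub>N\<^esub> a) = A)"
    unfolding a_inv_def m_inv_def by (simp add: Q_simps)
  also have "\<dots> = A +>\<^bsub>N\<^esub> \<ominus>\<^bsub>N\<^esub> a"
  proof (rule the_equality)
    have na: "\<ominus>\<^bsub>N\<^esub> a \<in> carrier N" using assms by simp
    show "A +>\<^bsub>N\<^esub> \<ominus>\<^bsub>N\<^esub> a \<in> a_rcosets\<^bsub>N\<^esub> A \<and>
      (A +>\<^bsub>N\<^esub> a) <+>\<^bsub>N\<^esub> (A +>\<^bsub>N\<^esub> \<ominus>\<^bsub>N\<^esub> a) = A \<and>
      (A +>\<^bsub>N\<^esub> \<ominus>\<^bsub>N\<^esub> a) <+>\<^bsub>N\<^esub> (A +>\<^bsub>N\<^esub> a) = A"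
      using assms na by (auto simp: rcosets_mem cos_sum G.r_neg G.l_neg cos_zero)
  next
    fix y assume y: "y \<in> a_rcosets\<^bsub>N\<^esub> A \<and>
      (A +>\<^bsub>N\<^esub> a) <+>\<^bsub>N\<^esub> y = A \<and> y <+>\<^bsub>N\<^esub> (A +>\<^bsub>N\<^esub> a) = A"
    then obtain b where b: "b \<in> carrier N" "y = A +>\<^bsub>N\<^esub> b" by (auto simp: rcosets_mem)
    with y assms have "A +>\<^bsub>N\<^esub> (a \<oplus>\<^bsub>N\<^esub> b) = A" by (simp add: cos_sum)
    then have "a \<oplus>\<^bsub>N\<^esub> b \<in> A" using cos_in_A assms b by simp
    then have "b \<ominus>\<^bsub>N\<^esub> \<ominus>\<^bsub>N\<^esub> a \<in> A" using assms b by (simp add: a_minus_def G.a_comm[of b a])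
    then show "y = A +>\<^bsub>N\<^esub> \<ominus>\<^bsub>N\<^esub> a" using cos_eq assms b by simp
  qed
  finally show ?thesis .
qed

lemma img_submod: assumes A: "submod R N A" and K: "submod R N K"
  shows "submod R (quot_mod N A) (quot_image N A K)"
proof -
  have Kc: "\<And>k. k \<in> K \<Longrightarrow> k \<in> carrier N" using sub_carr[OF K] .
  have h1: "quot_image N A K \<subseteq> carrier (quot_mod N A)"
    using Kc by (force simp: Q_simps rcosets_mem quot_image_def)
  have "A +>\<^bsub>N\<^esub> \<zero>\<^bsub>N\<^esub> \<in> quot_image N A K" using submodD(2)[OF K] by (auto simp: quot_image_def)
  then have h2: "\<zero>\<^bsub>quot_mod N A\<^esub> \<in> quot_image N A K" by (simp add: Q_simps cos_zero[OF A])
  have h3: "\<forall>x\<in>quot_image N A K. \<forall>y\<in>quot_image N A K. x \<oplus>\<^bsub>quot_mod N A\<^esub> y \<in> quot_image N A K"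
  proof (intro ballI)
    fix x y assume "x \<in> quot_image N A K" "y \<in> quot_image N A K"
    then obtain k1 k2 where k: "k1 \<in> K" "k2 \<in> K" "x = A +>\<^bsub>N\<^esub> k1" "y = A +>\<^bsub>N\<^esub> k2"
      by (auto simp: quot_image_def)
    then have "x \<oplus>\<^bsub>quot_mod N A\<^esub> y = A +>\<^bsub>N\<^esub> (k1 \<oplus>\<^bsub>N\<^esub> k2)"
      using cos_sum[OF A] Kc by (simp add: Q_simps)
    moreover have "k1 \<oplus>\<^bsub>N\<^esub> k2 \<in> K" using k submodD(3)[OF K] by auto
    ultimately show "x \<oplus>\<^bsub>quot_mod N A\<^esub> y \<in> quot_image N A K" by (auto simp: quot_image_def)
  qed
  have h4: "\<forall>x\<in>quot_image N A K. \<ominus>\<^bsub>quot_mod N A\<^esub> x \<in> quot_image N A K"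
  proof
    fix x assume "x \<in> quot_image N A K"
    then obtain k where k: "k \<in> K" "x = A +>\<^bsub>N\<^esub> k" by (auto simp: quot_image_def)
    then have "\<ominus>\<^bsub>quot_mod N A\<^esub> x = A +>\<^bsub>N\<^esub> \<ominus>\<^bsub>N\<^esub> k" using Q_inv[OF A] Kc by simp
    moreover have "\<ominus>\<^bsub>N\<^esub> k \<in> K" using k submodD(4)[OF K] by auto
    ultimately show "\<ominus>\<^bsub>quot_mod N A\<^esub> x \<in> quot_image N A K" by (auto simp: quot_image_def)
  qed
  have h5: "\<forall>r\<in>carrier R. \<forall>x\<in>quot_image N A K. smult (quot_mod N A) r x \<in> quot_image N A K"
  proof (intro ballI)
    fix r x assume r: "r \<in> carrier R" and "x \<in> quot_image N A K"
    then obtain k where k: "k \<in> K" "x = A +>\<^bsub>N\<^esub> k" by (auto simp: quot_image_def)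
    then have "smult (quot_mod N A) r x = A +>\<^bsub>N\<^esub> smult N r k" using cos_smult[OF A r] Kc by (simp add: Q_simps)
    moreover have "smult N r k \<in> K" using k submodD(5)[OF K r] by auto
    ultimately show "smult (quot_mod N A) r x \<in> quot_image N A K" by (auto simp: quot_image_def)
  qed
  show ?thesis unfolding submod_def using h1 h2 h3 h4 h5 by blast
qed

lemma sum_submod: assumes A: "submod R N A" and B: "submod R N B"
  shows "submod R N (A <+>\<^bsub>N\<^esub> B)"
proof -
  have Ac: "\<And>x. x \<in> A \<Longrightarrow> x \<in> carrier N" using sub_carr[OF A] .
  have Bc: "\<And>x. x \<in> B \<Longrightarrow> x \<in> carrier N" using sub_carr[OF B] .
  have h1: "A <+>\<^bsub>N\<^esub> B \<subseteq> carrier N" using Ac Bc by (auto simp: set_add_mem)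
  have h2: "\<zero>\<^bsub>N\<^esub> \<in> A <+>\<^bsub>N\<^esub> B"
    using submodD(2)[OF A] submodD(2)[OF B] unfolding set_add_mem by (intro bexI) auto
  have h3: "\<forall>x\<in>A <+>\<^bsub>N\<^esub> B. \<forall>y\<in>A <+>\<^bsub>N\<^esub> B. x \<oplus>\<^bsub>N\<^esub> y \<in> A <+>\<^bsub>N\<^esub> B"
  proof (intro ballI)
    fix x y assume "x \<in> A <+>\<^bsub>N\<^esub> B" "y \<in> A <+>\<^bsub>N\<^esub> B"
    then obtain a b a' b' where ab: "a \<in> A" "b \<in> B" "a' \<in> A" "b' \<in> B"
      "x = a \<oplus>\<^bsub>N\<^esub> b" "y = a' \<oplus>\<^bsub>N\<^esub> b'" by (auto simp: set_add_mem)
    then have "x \<oplus>\<^bsub>N\<^esub> y = (a \<oplus>\<^bsub>N\<^esub> a') \<oplus>\<^bsub>N\<^esub> (b \<oplus>\<^bsub>N\<^esub> b')" using Ac Bc by (simp add: G.ag4)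
    moreover have "a \<oplus>\<^bsub>N\<^esub> a' \<in> A" "b \<oplus>\<^bsub>N\<^esub> b' \<in> B" using ab submodD(3)[OF A] submodD(3)[OF B] by auto
    ultimately show "x \<oplus>\<^bsub>N\<^esub> y \<in> A <+>\<^bsub>N\<^esub> B" unfolding set_add_mem by blast
  qed
  have h4: "\<forall>x\<in>A <+>\<^bsub>N\<^esub> B. \<ominus>\<^bsub>N\<^esub> x \<in> A <+>\<^bsub>N\<^esub> B"
  proof
    fix x assume "x \<in> A <+>\<^bsub>N\<^esub> B"
    then obtain a b where ab: "a \<in> A" "b \<in> B" "x = a \<oplus>\<^bsub>N\<^esub> b" by (auto simp: set_add_mem)
    then have "\<ominus>\<^bsub>N\<^esub> x = \<ominus>\<^bsub>N\<^esub> a \<oplus>\<^bsub>N\<^esub> \<ominus>\<^bsub>N\<^esub> b" using Ac Bc by (simp add: G.ag6)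
    moreover have "\<ominus>\<^bsub>N\<^esub> a \<in> A" "\<ominus>\<^bsub>N\<^esub> b \<in> B" using ab submodD(4)[OF A] submodD(4)[OF B] by auto
    ultimately show "\<ominus>\<^bsub>N\<^esub> x \<in> A <+>\<^bsub>N\<^esub> B" unfolding set_add_mem by blast
  qed
  have h5: "\<forall>r\<in>carrier R. \<forall>x\<in>A <+>\<^bsub>N\<^esub> B. smult N r x \<in> A <+>\<^bsub>N\<^esub> B"
  proof (intro ballI)
    fix r x assume r: "r \<in> carrier R" and "x \<in> A <+>\<^bsub>N\<^esub> B"
    then obtain a b where ab: "a \<in> A" "b \<in> B" "x = a \<oplus>\<^bsub>N\<^esub> b" by (auto simp: set_add_mem)
    then have "smult N r x = smult N r a \<oplus>\<^bsub>N\<^esub> smult N r b" using Ac Bc r by (simp add: rmoduleD(4)[OF rm])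
    moreover have "smult N r a \<in> A" "smult N r b \<in> B" using ab submodD(5)[OF A r] submodD(5)[OF B r] by auto
    ultimately show "smult N r x \<in> A <+>\<^bsub>N\<^esub> B" unfolding set_add_mem by blast
  qed
  show ?thesis unfolding submod_def using h1 h2 h3 h4 h5 by blast
qed

lemma small_lemma:
  assumes A: "submod R N A" and S: "submod R N S" and AS: "A \<subseteq> S"
  shows "small_in R (quot_mod N A) (quot_image N A S) \<longleftrightarrow>
         (\<forall>K. submod R N K \<longrightarrow> S <+>\<^bsub>N\<^esub> K = carrier N \<longrightarrow> A <+>\<^bsub>N\<^esub> K = carrier N)"
proof
  assume sm: "small_in R (quot_mod N A) (quot_image N A S)"
  show "\<forall>K. submod R N K \<longrightarrow> S <+>\<^bsub>N\<^esub> K = carrier N \<longrightarrow> A <+>\<^bsub>N\<^esub> K = carrier N"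
  proof (intro allI impI)
    fix K assume K: "submod R N K" and SK: "S <+>\<^bsub>N\<^esub> K = carrier N"
    have L: "submod R (quot_mod N A) (quot_image N A K)" by (rule img_submod[OF A K])
    have "quot_image N A S <+>\<^bsub>quot_mod N A\<^esub> quot_image N A K = carrier (quot_mod N A)"
    proof (rule Set.set_eqI, rule iffI)
      fix C assume "C \<in> quot_image N A S <+>\<^bsub>quot_mod N A\<^esub> quot_image N A K"
      then obtain s k where sk: "s \<in> S" "k \<in> K" "C = (A +>\<^bsub>N\<^esub> s) <+>\<^bsub>N\<^esub> (A +>\<^bsub>N\<^esub> k)"
        by (auto simp: set_add_mem quot_image_def Q_simps)
      then have "C = A +>\<^bsub>N\<^esub> (s \<oplus>\<^bsub>N\<^esub> k)" using cos_sum[OF A] sub_carr[OF S] sub_carr[OF K] by simp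
      moreover have "s \<oplus>\<^bsub>N\<^esub> k \<in> carrier N" using sk sub_carr[OF S] sub_carr[OF K] by simp
      ultimately show "C \<in> carrier (quot_mod N A)" by (auto simp: Q_simps rcosets_mem)
    next
      fix C assume "C \<in> carrier (quot_mod N A)"
      then obtain a where a: "a \<in> carrier N" "C = A +>\<^bsub>N\<^esub> a" by (auto simp: Q_simps rcosets_mem)
      then have "a \<in> S <+>\<^bsub>N\<^esub> K" using SK by simp
      then obtain s k where sk: "s \<in> S" "k \<in> K" "a = s \<oplus>\<^bsub>N\<^esub> k" by (auto simp: set_add_mem)
      then have "C = (A +>\<^bsub>N\<^esub> s) \<oplus>\<^bsub>quot_mod N A\<^esub> (A +>\<^bsub>N\<^esub> k)"
        using a cos_sum[OF A] sub_carr[OF S] sub_carr[OF K] by (simp add: Q_simps)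
      moreover have "A +>\<^bsub>N\<^esub> s \<in> quot_image N A S" "A +>\<^bsub>N\<^esub> k \<in> quot_image N A K"
        using sk by (auto simp: quot_image_def)
      ultimately show "C \<in> quot_image N A S <+>\<^bsub>quot_mod N A\<^esub> quot_image N A K"
        unfolding set_add_mem by blast
    qed
    then have QK: "quot_image N A K = carrier (quot_mod N A)" using sm L unfolding small_in_def by blast
    show "A <+>\<^bsub>N\<^esub> K = carrier N"
    proof (rule Set.set_eqI, rule iffI)
      fix x assume "x \<in> A <+>\<^bsub>N\<^esub> K"
      then show "x \<in> carrier N" using sub_carr[OF A] sub_carr[OF K] by (auto simp: set_add_mem)
    next
      fix x assume x: "x \<in> carrier N"
      then have "A +>\<^bsub>N\<^esub> x \<in> quot_image N A K" using QK by (auto simp: Q_simps rcosets_mem)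
      then obtain k where k: "k \<in> K" "A +>\<^bsub>N\<^esub> x = A +>\<^bsub>N\<^esub> k" by (auto simp: quot_image_def)
      have kc: "k \<in> carrier N" using k sub_carr[OF K] by simp
      have d: "x \<ominus>\<^bsub>N\<^esub> k \<in> A" using cos_eq[OF A x kc] k by simp
      have "x = (x \<ominus>\<^bsub>N\<^esub> k) \<oplus>\<^bsub>N\<^esub> k" using x kc by (simp add: a_minus_def G.a_assoc G.l_neg)
      then show "x \<in> A <+>\<^bsub>N\<^esub> K" using d k unfolding set_add_mem by blast
    qed
  qed
next
  assume H: "\<forall>K. submod R N K \<longrightarrow> S <+>\<^bsub>N\<^esub> K = carrier N \<longrightarrow> A <+>\<^bsub>N\<^esub> K = carrier N"
  show "small_in R (quot_mod N A) (quot_image N A S)"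
    unfolding small_in_def
  proof (intro conjI allI impI)
    show "submod R (quot_mod N A) (quot_image N A S)" by (rule img_submod[OF A S])
    fix L assume L: "submod R (quot_mod N A) L"
      and SL: "quot_image N A S <+>\<^bsub>quot_mod N A\<^esub> L = carrier (quot_mod N A)"
    have LQ: "L \<subseteq> a_rcosets\<^bsub>N\<^esub> A" using submodD(1)[OF L] by (simp add: Q_simps)
    have Lrep: "\<And>C. C \<in> L \<Longrightarrow> \<exists>c\<in>carrier N. C = A +>\<^bsub>N\<^esub> c" using LQ by (auto simp: rcosets_mem)
    define K where "K = \<Union>L"
    have AL: "A \<in> L" using submodD(2)[OF L] by (simp add: Q_simps)
    have k1: "K \<subseteq> carrier N" unfolding K_def using Lrep cos_sub[OF A] by blast
    have k2: "\<zero>\<^bsub>N\<^esub> \<in> K" unfolding K_def using AL submodD(2)[OF A] by blast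
    have k3: "\<forall>x\<in>K. \<forall>y\<in>K. x \<oplus>\<^bsub>N\<^esub> y \<in> K"
    proof (intro ballI)
      fix x y assume "x \<in> K" "y \<in> K"
      then obtain C1 C2 where C: "C1 \<in> L" "C2 \<in> L" "x \<in> C1" "y \<in> C2" unfolding K_def by blast
      have "C1 <+>\<^bsub>N\<^esub> C2 \<in> L" using submodD(3)[OF L C(1,2)] by (simp add: Q_simps)
      moreover have "x \<oplus>\<^bsub>N\<^esub> y \<in> C1 <+>\<^bsub>N\<^esub> C2" using C unfolding set_add_mem by blast
      ultimately show "x \<oplus>\<^bsub>N\<^esub> y \<in> K" unfolding K_def by blast
    qed
    have k4: "\<forall>x\<in>K. \<ominus>\<^bsub>N\<^esub> x \<in> K"
    proof
      fix x assume "x \<in> K"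
      then obtain C where C: "C \<in> L" "x \<in> C" unfolding K_def by blast
      then obtain c where c: "c \<in> carrier N" "C = A +>\<^bsub>N\<^esub> c" using Lrep by blast
      have "A +>\<^bsub>N\<^esub> \<ominus>\<^bsub>N\<^esub> c \<in> L" using submodD(4)[OF L C(1)] Q_inv[OF A c(1)] c(2) by simp
      moreover obtain h where h: "h \<in> A" "x = h \<oplus>\<^bsub>N\<^esub> c" using C c by (auto simp: rcos_mem)
      moreover have "\<ominus>\<^bsub>N\<^esub> (h \<oplus>\<^bsub>N\<^esub> c) = \<ominus>\<^bsub>N\<^esub> h \<oplus>\<^bsub>N\<^esub> \<ominus>\<^bsub>N\<^esub> c"
        using h c sub_carr[OF A] by (simp add: G.ag6)
      moreover have "\<ominus>\<^bsub>N\<^esub> h \<in> A" using h submodD(4)[OF A] by simp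
      ultimately have "\<ominus>\<^bsub>N\<^esub> x \<in> A +>\<^bsub>N\<^esub> \<ominus>\<^bsub>N\<^esub> c \<and> A +>\<^bsub>N\<^esub> \<ominus>\<^bsub>N\<^esub> c \<in> L"
        by (auto simp: rcos_mem)
      then show "\<ominus>\<^bsub>N\<^esub> x \<in> K" unfolding K_def by blast
    qed
    have k5: "\<forall>r\<in>carrier R. \<forall>x\<in>K. smult N r x \<in> K"
    proof (intro ballI)
      fix r x assume r: "r \<in> carrier R" and "x \<in> K"
      then obtain C where C: "C \<in> L" "x \<in> C" unfolding K_def by blast
      have "A <+>\<^bsub>N\<^esub> (smult N r ` C) \<in> L" using submodD(5)[OF L r C(1)] by (simp add: Q_simps)
      moreover have "smult N r x \<in> A <+>\<^bsub>N\<^esub> (smult N r ` C)"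
      proof -
        have xc: "x \<in> carrier N" using C Lrep cos_sub[OF A] by blast
        have "smult N r x = \<zero>\<^bsub>N\<^esub> \<oplus>\<^bsub>N\<^esub> smult N r x" using rmoduleD(3)[OF rm r xc] by simp
        then show ?thesis using submodD(2)[OF A] C(2) unfolding set_add_mem by blast
      qed
      ultimately show "smult N r x \<in> K" unfolding K_def by blast
    qed
    have K: "submod R N K" unfolding submod_def using k1 k2 k3 k4 k5 by blast
    have SK: "S <+>\<^bsub>N\<^esub> K = carrier N"
    proof (rule Set.set_eqI, rule iffI)
      fix x assume "x \<in> S <+>\<^bsub>N\<^esub> K"
      then show "x \<in> carrier N" using sub_carr[OF S] k1 by (auto simp: set_add_mem)
    next
      fix x assume x: "x \<in> carrier N"
      then have "A +>\<^bsub>N\<^esub> x \<in> quot_image N A S <+>\<^bsub>quot_mod N A\<^esub> L" using SL by (auto simp: Q_simps rcosets_mem)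
      then obtain s C where sC: "s \<in> S" "C \<in> L" "A +>\<^bsub>N\<^esub> x = (A +>\<^bsub>N\<^esub> s) <+>\<^bsub>N\<^esub> C"
        by (auto simp: set_add_mem quot_image_def Q_simps)
      obtain c where c: "c \<in> carrier N" "C = A +>\<^bsub>N\<^esub> c" using Lrep sC(2) by blast
      have sc: "s \<in> carrier N" using sC sub_carr[OF S] by simp
      have "A +>\<^bsub>N\<^esub> x = A +>\<^bsub>N\<^esub> (s \<oplus>\<^bsub>N\<^esub> c)" using sC c cos_sum[OF A sc c(1)] by simp
      then have "x \<in> A +>\<^bsub>N\<^esub> (s \<oplus>\<^bsub>N\<^esub> c)" using cos_self[OF A x] by simp
      then obtain h where h: "h \<in> A" "x = h \<oplus>\<^bsub>N\<^esub> (s \<oplus>\<^bsub>N\<^esub> c)" by (auto simp: rcos_mem)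
      have hc: "h \<in> carrier N" using h sub_carr[OF A] by simp
      have "x = (h \<oplus>\<^bsub>N\<^esub> s) \<oplus>\<^bsub>N\<^esub> c" using h hc sc c by (simp add: G.a_assoc)
      moreover have "h \<oplus>\<^bsub>N\<^esub> s \<in> S" using h AS sC submodD(3)[OF S] by blast
      moreover have "c \<in> K" unfolding K_def using cos_self[OF A c(1)] c sC(2) by blast
      ultimately show "x \<in> S <+>\<^bsub>N\<^esub> K" unfolding set_add_mem by blast
    qed
    have AK: "A <+>\<^bsub>N\<^esub> K = carrier N" using H K SK by blast
    show "L = carrier (quot_mod N A)"
    proof (rule Set.set_eqI, rule iffI)
      fix C assume "C \<in> L" then show "C \<in> carrier (quot_mod N A)" using LQ by (simp add: Q_simps subsetD)
    next
      fix C assume "C \<in> carrier (quot_mod N A)"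
      then obtain x where x: "x \<in> carrier N" "C = A +>\<^bsub>N\<^esub> x" by (auto simp: Q_simps rcosets_mem)
      then have "x \<in> A <+>\<^bsub>N\<^esub> K" using AK by simp
      then obtain h k where hk: "h \<in> A" "k \<in> K" "x = h \<oplus>\<^bsub>N\<^esub> k" by (auto simp: set_add_mem)
      then obtain C' where C': "C' \<in> L" "k \<in> C'" unfolding K_def by blast
      then obtain c where c: "c \<in> carrier N" "C' = A +>\<^bsub>N\<^esub> c" using Lrep by blast
      then obtain h' where h': "h' \<in> A" "k = h' \<oplus>\<^bsub>N\<^esub> c" using C' by (auto simp: rcos_mem)
      have hc: "h \<in> carrier N" "h' \<in> carrier N" using hk h' sub_carr[OF A] by auto
      have "x \<ominus>\<^bsub>N\<^esub> c = h \<oplus>\<^bsub>N\<^esub> h'" using hk h' hc c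
        by (simp add: a_minus_def G.a_assoc G.r_neg)
      moreover have "h \<oplus>\<^bsub>N\<^esub> h' \<in> A" using hk h' submodD(3)[OF A] by simp
      ultimately have "C = C'" using cos_eq[OF A x(1) c(1)] x c by simp
      then show "C \<in> L" using C' by simp
    qed
  qed
qed

lemma beta_char: assumes U: "submod R N U" and V: "submod R N V"
  shows "beta_star R N U V \<longleftrightarrow> (\<forall>K. submod R N K \<longrightarrow> (U <+>\<^bsub>N\<^esub> V) <+>\<^bsub>N\<^esub> K = carrier N \<longrightarrow>
            U <+>\<^bsub>N\<^esub> K = carrier N \<and> V <+>\<^bsub>N\<^esub> K = carrier N)"
proof -
  have S: "submod R N (U <+>\<^bsub>N\<^esub> V)" by (rule sum_submod[OF U V])
  have XS: "U \<subseteq> U <+>\<^bsub>N\<^esub> V"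
  proof
    fix x assume x: "x \<in> U"
    then have "x = x \<oplus>\<^bsub>N\<^esub> \<zero>\<^bsub>N\<^esub>" using sub_carr[OF U] by simp
    then show "x \<in> U <+>\<^bsub>N\<^esub> V" using x submodD(2)[OF V] unfolding set_add_mem by blast
  qed
  have YS: "V \<subseteq> U <+>\<^bsub>N\<^esub> V"
  proof
    fix x assume x: "x \<in> V"
    then have "x = \<zero>\<^bsub>N\<^esub> \<oplus>\<^bsub>N\<^esub> x" using sub_carr[OF V] by simp
    then show "x \<in> U <+>\<^bsub>N\<^esub> V" using x submodD(2)[OF U] unfolding set_add_mem by blast
  qed
  show ?thesis unfolding beta_star_def small_lemma[OF U S XS] small_lemma[OF V S YS] by blast
qed

end

lemma set_add_restr: "A <+>\<^bsub>M\<lparr>carrier := S\<rparr>\<^esub> B = A <+>\<^bsub>M\<^esub> B"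
  by (simp add: set_add_def set_mult_def)

lemma cyclic_restr: "cyclic_sub R (M\<lparr>carrier := S\<rparr>) x = cyclic_sub R M x"
  by (simp add: cyclic_sub_def)

context
  fixes R :: "('a, 'c) ring_scheme" and M :: "('a, 'm) module"
  assumes rm: "rmodule R M"
begin

interpretation G: abelian_group M using rmoduleD(2)[OF rm] .
interpretation RR: ring R using rmoduleD(1)[OF rm] .

lemma restr_rmodule: assumes S: "submod R M S" shows "rmodule R (M\<lparr>carrier := S\<rparr>)"
proof -
  have Sc: "\<And>x. x \<in> S \<Longrightarrow> x \<in> carrier M" using sub_carr[OF rm S] .
  have ag: "abelian_group (M\<lparr>carrier := S\<rparr>)"
  proof (rule abelian_groupI)
    fix x y z assume "x \<in> carrier (M\<lparr>carrier := S\<rparr>)" "y \<in> carrier (M\<lparr>carrier := S\<rparr>)"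
      "z \<in> carrier (M\<lparr>carrier := S\<rparr>)"
    then show "x \<oplus>\<^bsub>M\<lparr>carrier := S\<rparr>\<^esub> y \<oplus>\<^bsub>M\<lparr>carrier := S\<rparr>\<^esub> z =
         x \<oplus>\<^bsub>M\<lparr>carrier := S\<rparr>\<^esub> (y \<oplus>\<^bsub>M\<lparr>carrier := S\<rparr>\<^esub> z)"
      using Sc by (simp add: G.a_assoc)
  next
    fix x y assume "x \<in> carrier (M\<lparr>carrier := S\<rparr>)" "y \<in> carrier (M\<lparr>carrier := S\<rparr>)"
    then show "x \<oplus>\<^bsub>M\<lparr>carrier := S\<rparr>\<^esub> y \<in> carrier (M\<lparr>carrier := S\<rparr>)"
      "x \<oplus>\<^bsub>M\<lparr>carrier := S\<rparr>\<^esub> y = y \<oplus>\<^bsub>M\<lparr>carrier := S\<rparr>\<^esub> x"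
      using Sc submodD(3)[OF S] by (auto simp: G.a_comm)
  next
    show "\<zero>\<^bsub>M\<lparr>carrier := S\<rparr>\<^esub> \<in> carrier (M\<lparr>carrier := S\<rparr>)" using submodD(2)[OF S] by simp
  next
    fix x assume "x \<in> carrier (M\<lparr>carrier := S\<rparr>)"
    then show "\<zero>\<^bsub>M\<lparr>carrier := S\<rparr>\<^esub> \<oplus>\<^bsub>M\<lparr>carrier := S\<rparr>\<^esub> x = x" using Sc by simp
  next
    fix x assume x: "x \<in> carrier (M\<lparr>carrier := S\<rparr>)"
    then have "\<ominus>\<^bsub>M\<^esub> x \<in> S" "\<ominus>\<^bsub>M\<^esub> x \<oplus>\<^bsub>M\<^esub> x = \<zero>\<^bsub>M\<^esub>" using Sc submodD(4)[OF S] by (auto simp: G.l_neg)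
    then show "\<exists>y\<in>carrier (M\<lparr>carrier := S\<rparr>). y \<oplus>\<^bsub>M\<lparr>carrier := S\<rparr>\<^esub> x = \<zero>\<^bsub>M\<lparr>carrier := S\<rparr>\<^esub>"
      by auto
  qed
  show ?thesis unfolding rmodule_def
    by (intro conjI ballI; simp add: rmoduleD(3-7)[OF rm] Sc submodD(5)[OF S] ag rmoduleD(1)[OF rm])
qed

lemma restr_inv: assumes S: "submod R M S" and x: "x \<in> S"
  shows "\<ominus>\<^bsub>M\<lparr>carrier := S\<rparr>\<^esub> x = \<ominus>\<^bsub>M\<^esub> x"
proof -
  interpret H: abelian_group "M\<lparr>carrier := S\<rparr>" using rmoduleD(2)[OF restr_rmodule[OF S]] .
  have xS: "x \<in> carrier (M\<lparr>carrier := S\<rparr>)" using x by simp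
  have 1: "\<ominus>\<^bsub>M\<lparr>carrier := S\<rparr>\<^esub> x \<in> S" using H.a_inv_closed[OF xS] by simp
  have 2: "\<ominus>\<^bsub>M\<lparr>carrier := S\<rparr>\<^esub> x \<oplus>\<^bsub>M\<^esub> x = \<zero>\<^bsub>M\<^esub>" using H.l_neg[OF xS] by simp
  show ?thesis using G.minus_equality[OF 2] sub_carr[OF rm S] x 1 by simp
qed

lemma restr_submod: assumes S: "submod R M S"
  shows "submod R (M\<lparr>carrier := S\<rparr>) K \<longleftrightarrow> submod R M K \<and> K \<subseteq> S"
proof
  assume K: "submod R (M\<lparr>carrier := S\<rparr>) K"
  then have KS: "K \<subseteq> S" unfolding submod_def by simp
  have "\<forall>x\<in>K. \<ominus>\<^bsub>M\<^esub> x \<in> K"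
  proof
    fix x assume x: "x \<in> K"
    then have xS: "x \<in> S" using KS by auto
    from K x have "\<ominus>\<^bsub>M\<lparr>carrier := S\<rparr>\<^esub> x \<in> K" unfolding submod_def by blast
    then show "\<ominus>\<^bsub>M\<^esub> x \<in> K" using restr_inv[OF S xS] by simp
  qed
  moreover have "K \<subseteq> carrier M" using KS sub_carr[OF rm S] by blast
  moreover have "\<zero>\<^bsub>M\<^esub> \<in> K" "\<forall>x\<in>K. \<forall>y\<in>K. x \<oplus>\<^bsub>M\<^esub> y \<in> K"
      "\<forall>r\<in>carrier R. \<forall>x\<in>K. smult M r x \<in> K"
    using K unfolding submod_def by simp_all
  ultimately show "submod R M K \<and> K \<subseteq> S" using KS unfolding submod_def by blast
next
  assume K: "submod R M K \<and> K \<subseteq> S"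
  then have "\<forall>x\<in>K. \<ominus>\<^bsub>M\<lparr>carrier := S\<rparr>\<^esub> x \<in> K" using restr_inv[OF S] unfolding submod_def by auto
  moreover have "\<zero>\<^bsub>M\<^esub> \<in> K" "\<forall>x\<in>K. \<forall>y\<in>K. x \<oplus>\<^bsub>M\<^esub> y \<in> K"
      "\<forall>r\<in>carrier R. \<forall>x\<in>K. smult M r x \<in> K"
    using K unfolding submod_def by simp_all
  ultimately show "submod R (M\<lparr>carrier := S\<rparr>) K" using K unfolding submod_def by simp
qed

lemma smult_zero: assumes x: "x \<in> carrier M" shows "smult M \<zero>\<^bsub>R\<^esub> x = \<zero>\<^bsub>M\<^esub>"
proof -
  have c: "smult M \<zero>\<^bsub>R\<^esub> x \<in> carrier M" using rmoduleD(3)[OF rm RR.zero_closed x] .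
  have "smult M \<zero>\<^bsub>R\<^esub> x = smult M \<zero>\<^bsub>R\<^esub> x \<oplus>\<^bsub>M\<^esub> smult M \<zero>\<^bsub>R\<^esub> x"
    using rmoduleD(5)[OF rm RR.zero_closed RR.zero_closed x] by simp
  then have "smult M \<zero>\<^bsub>R\<^esub> x \<oplus>\<^bsub>M\<^esub> smult M \<zero>\<^bsub>R\<^esub> x \<oplus>\<^bsub>M\<^esub> \<ominus>\<^bsub>M\<^esub> smult M \<zero>\<^bsub>R\<^esub> x
      = smult M \<zero>\<^bsub>R\<^esub> x \<oplus>\<^bsub>M\<^esub> \<ominus>\<^bsub>M\<^esub> smult M \<zero>\<^bsub>R\<^esub> x"
    by simp
  then show ?thesis using c by (simp add: G.ag1 G.r_neg)
qed

lemma smult_neg: assumes r: "r \<in> carrier R" and x: "x \<in> carrier M"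
  shows "smult M (\<ominus>\<^bsub>R\<^esub> r) x = \<ominus>\<^bsub>M\<^esub> smult M r x"
proof -
  have "smult M (\<ominus>\<^bsub>R\<^esub> r) x \<oplus>\<^bsub>M\<^esub> smult M r x = \<zero>\<^bsub>M\<^esub>"
    using rmoduleD(5)[OF rm RR.a_inv_closed[OF r] r x] smult_zero[OF x] r by (simp add: RR.l_neg)
  then show ?thesis using G.minus_equality rmoduleD(3)[OF rm] r x RR.a_inv_closed[OF r] by simp
qed

lemma cyc_submod: assumes x: "x \<in> carrier M" shows "submod R M (cyclic_sub R M x)"
proof -
  have h1: "cyclic_sub R M x \<subseteq> carrier M" using rmoduleD(3)[OF rm _ x] by (auto simp: cyclic_sub_def)
  have h2: "\<zero>\<^bsub>M\<^esub> \<in> cyclic_sub R M x" using smult_zero[OF x] RR.zero_closed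
    unfolding cyclic_sub_def by force
  have h3: "\<forall>a\<in>cyclic_sub R M x. \<forall>b\<in>cyclic_sub R M x. a \<oplus>\<^bsub>M\<^esub> b \<in> cyclic_sub R M x"
  proof (intro ballI)
    fix a b assume "a \<in> cyclic_sub R M x" "b \<in> cyclic_sub R M x"
    then obtain r s where rs: "r \<in> carrier R" "s \<in> carrier R" "a = smult M r x" "b = smult M s x"
      unfolding cyclic_sub_def by blast
    then have "a \<oplus>\<^bsub>M\<^esub> b = smult M (r \<oplus>\<^bsub>R\<^esub> s) x" using rmoduleD(5)[OF rm rs(1,2) x] by simp
    then show "a \<oplus>\<^bsub>M\<^esub> b \<in> cyclic_sub R M x" unfolding cyclic_sub_def using rs RR.a_closed by blast
  qed
  have h4: "\<forall>a\<in>cyclic_sub R M x. \<ominus>\<^bsub>M\<^esub> a \<in> cyclic_sub R M x"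
  proof
    fix a assume "a \<in> cyclic_sub R M x"
    then obtain r where rs: "r \<in> carrier R" "a = smult M r x"
      unfolding cyclic_sub_def by blast
    then have "\<ominus>\<^bsub>M\<^esub> a = smult M (\<ominus>\<^bsub>R\<^esub> r) x" using smult_neg[OF rs(1) x] by simp
    then show "\<ominus>\<^bsub>M\<^esub> a \<in> cyclic_sub R M x" unfolding cyclic_sub_def using rs RR.a_inv_closed by blast
  qed
  have h5: "\<forall>s\<in>carrier R. \<forall>a\<in>cyclic_sub R M x. smult M s a \<in> cyclic_sub R M x"
  proof (intro ballI)
    fix s a assume s: "s \<in> carrier R" and "a \<in> cyclic_sub R M x"
    then obtain r where rs: "r \<in> carrier R" "a = smult M r x"
      unfolding cyclic_sub_def by blast
    then have "smult M s a = smult M (r \<otimes>\<^bsub>R\<^esub> s) x" using rmoduleD(6)[OF rm rs(1) s x] by simp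
    then show "smult M s a \<in> cyclic_sub R M x" unfolding cyclic_sub_def using rs s RR.m_closed by blast
  qed
  show ?thesis unfolding submod_def using h1 h2 h3 h4 h5 by blast
qed

lemma cyc_self: assumes x: "x \<in> carrier M" shows "x \<in> cyclic_sub R M x"
proof -
  have "x = smult M \<one>\<^bsub>R\<^esub> x" using rmoduleD(7)[OF rm x] by simp
  then show ?thesis unfolding cyclic_sub_def using RR.one_closed by blast
qed

lemma cyc_sub: assumes K: "submod R M K" and x: "x \<in> K" shows "cyclic_sub R M x \<subseteq> K"
proof
  fix y assume "y \<in> cyclic_sub R M x"
  then obtain r where "r \<in> carrier R" "y = smult M r x" unfolding cyclic_sub_def by blast
  then show "y \<in> K" using submodD(5)[OF K _ x] by simp
qed

lemma int_submod: "submod R M A \<Longrightarrow> submod R M B \<Longrightarrow> submod R M (A \<inter> B)"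
  unfolding submod_def by auto

lemma set_add_comm: assumes A: "A \<subseteq> carrier M" and B: "B \<subseteq> carrier M"
  shows "A <+>\<^bsub>M\<^esub> B = B <+>\<^bsub>M\<^esub> A"
proof (rule Set.set_eqI)
  fix x
  show "x \<in> A <+>\<^bsub>M\<^esub> B \<longleftrightarrow> x \<in> B <+>\<^bsub>M\<^esub> A"
  proof
    assume "x \<in> A <+>\<^bsub>M\<^esub> B"
    then obtain a b where ab: "a \<in> A" "b \<in> B" "x = a \<oplus>\<^bsub>M\<^esub> b" unfolding set_add_mem by blast
    then have "x = b \<oplus>\<^bsub>M\<^esub> a" using A B G.a_comm[of a b] by auto
    then show "x \<in> B <+>\<^bsub>M\<^esub> A" using ab unfolding set_add_mem by blast
  next
    assume "x \<in> B <+>\<^bsub>M\<^esub> A"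
    then obtain a b where ab: "a \<in> B" "b \<in> A" "x = a \<oplus>\<^bsub>M\<^esub> b" unfolding set_add_mem by blast
    then have "x = b \<oplus>\<^bsub>M\<^esub> a" using A B G.a_comm[of a b] by auto
    then show "x \<in> A <+>\<^bsub>M\<^esub> B" using ab unfolding set_add_mem by blast
  qed
qed

end

lemma (in abelian_group) ag9: "a1 \<in> carrier G \<Longrightarrow> a2 \<in> carrier G \<Longrightarrow> d1 \<in> carrier G \<Longrightarrow> d2 \<in> carrier G
  \<Longrightarrow> k1 \<in> carrier G \<Longrightarrow> k2 \<in> carrier G \<Longrightarrow>
  ((a1 \<oplus> a2) \<oplus> (d1 \<oplus> d2)) \<oplus> (k1 \<oplus> k2) = ((a1 \<oplus> d1) \<oplus> k1) \<oplus> ((a2 \<oplus> d2) \<oplus> k2)"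
  using ag4[of a1 a2 d2 d1] ag4[of "a1 \<oplus> d1" "a2 \<oplus> d2" k2 k1] by simp

lemma (in abelian_group) ag10: assumes "a \<in> carrier G" "b \<in> carrier G" "a' \<in> carrier G" "b' \<in> carrier G"
  and e: "a \<oplus> b = a' \<oplus> b'" shows "a \<oplus> \<ominus> a' = b' \<oplus> \<ominus> b"
proof -
  have "(a \<oplus> b) \<oplus> (\<ominus> a' \<oplus> \<ominus> b) = (a \<oplus> \<ominus> a') \<oplus> (b \<oplus> \<ominus> b)" using assms by (simp add: ag4)
  also have "\<dots> = a \<oplus> \<ominus> a'" using assms by (simp add: r_neg)
  finally have 1: "(a \<oplus> b) \<oplus> (\<ominus> a' \<oplus> \<ominus> b) = a \<oplus> \<ominus> a'" .
  have "(a' \<oplus> b') \<oplus> (\<ominus> a' \<oplus> \<ominus> b) = (a' \<oplus> \<ominus> a') \<oplus> (b' \<oplus> \<ominus> b)" using assms by (simp add: ag4)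
  also have "\<dots> = b' \<oplus> \<ominus> b" using assms by (simp add: r_neg)
  finally show ?thesis using 1 e by simp
qed

lemma (in abelian_group) ag11: assumes "a \<in> carrier G" "b \<in> carrier G" "a \<oplus> \<ominus> b = \<zero>" shows "a = b"
proof -
  have "a = (a \<oplus> \<ominus> b) \<oplus> b" using assms(1,2) by (simp add: a_assoc l_neg)
  then show ?thesis using assms by simp
qed

context
  fixes R :: "('a, 'c) ring_scheme" and M :: "('a, 'm) module" and M1 M2 :: "'m set"
  assumes rm: "rmodule R M" and s1: "submod R M M1" and s2: "submod R M M2"
    and sm: "M1 <+>\<^bsub>M\<^esub> M2 = carrier M" and it: "M1 \<inter> M2 = {\<zero>\<^bsub>M\<^esub>}"
begin

interpretation G: abelian_group M using rmoduleD(2)[OF rm] .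

lemma c1: "x \<in> M1 \<Longrightarrow> x \<in> carrier M" using sub_carr[OF rm s1] .
lemma c2: "x \<in> M2 \<Longrightarrow> x \<in> carrier M" using sub_carr[OF rm s2] .

lemma uniq: assumes a: "a \<in> M1" "a' \<in> M1" and b: "b \<in> M2" "b' \<in> M2"
  and e: "a \<oplus>\<^bsub>M\<^esub> b = a' \<oplus>\<^bsub>M\<^esub> b'" shows "a = a' \<and> b = b'"
proof -
  have ac: "a \<in> carrier M" "a' \<in> carrier M" "b \<in> carrier M" "b' \<in> carrier M" using a b c1 c2 by auto
  have d: "a \<oplus>\<^bsub>M\<^esub> \<ominus>\<^bsub>M\<^esub> a' = b' \<oplus>\<^bsub>M\<^esub> \<ominus>\<^bsub>M\<^esub> b" using G.ag10[OF ac(1,3,2,4) e] .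
  have "a \<oplus>\<^bsub>M\<^esub> \<ominus>\<^bsub>M\<^esub> a' \<in> M1" using sub_minus[OF rm s1 a] by (simp add: a_minus_def)
  moreover have "b' \<oplus>\<^bsub>M\<^esub> \<ominus>\<^bsub>M\<^esub> b \<in> M2" using sub_minus[OF rm s2 b(2,1)] by (simp add: a_minus_def)
  ultimately have "a \<oplus>\<^bsub>M\<^esub> \<ominus>\<^bsub>M\<^esub> a' = \<zero>\<^bsub>M\<^esub>" "b' \<oplus>\<^bsub>M\<^esub> \<ominus>\<^bsub>M\<^esub> b = \<zero>\<^bsub>M\<^esub>" using d it by auto
  then show ?thesis using G.ag11[OF ac(1,2)] G.ag11[OF ac(4,3)] by auto
qed

lemma proj1: "m \<in> M1 \<Longrightarrow> a \<in> M1 \<Longrightarrow> b \<in> M2 \<Longrightarrow> m = a \<oplus>\<^bsub>M\<^esub> b \<Longrightarrow> m = a"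
  using uniq[of m a "\<zero>\<^bsub>M\<^esub>" b] submodD(2)[OF s2] c1 by simp

lemma proj2: "m \<in> M2 \<Longrightarrow> a \<in> M1 \<Longrightarrow> b \<in> M2 \<Longrightarrow> m = a \<oplus>\<^bsub>M\<^esub> b \<Longrightarrow> m = b"
  using uniq[of "\<zero>\<^bsub>M\<^esub>" a m b] submodD(2)[OF s1] c2 by simp

lemma decomp: assumes "x \<in> carrier M" shows "\<exists>a\<in>M1. \<exists>b\<in>M2. x = a \<oplus>\<^bsub>M\<^esub> b"
proof -
  have "x \<in> M1 <+>\<^bsub>M\<^esub> M2" using sm assms by simp
  then show ?thesis unfolding set_add_mem .
qed

lemma P_duo: assumes duo: "duo_module R M" and N: "submod R M N"
  shows "N \<subseteq> (N \<inter> M1) <+>\<^bsub>M\<^esub> (N \<inter> M2)"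
proof -
  define \<pi> where "\<pi> = (\<lambda>y. THE a. a \<in> M1 \<and> (\<exists>b\<in>M2. y = a \<oplus>\<^bsub>M\<^esub> b))"
  have pi: "\<pi> (a \<oplus>\<^bsub>M\<^esub> b) = a" if "a \<in> M1" "b \<in> M2" for a b
    unfolding \<pi>_def
  proof (rule the_equality)
    show "a \<in> M1 \<and> (\<exists>ba\<in>M2. a \<oplus>\<^bsub>M\<^esub> b = a \<oplus>\<^bsub>M\<^esub> ba)" using that by blast
    fix a' assume "a' \<in> M1 \<and> (\<exists>b'\<in>M2. a \<oplus>\<^bsub>M\<^esub> b = a' \<oplus>\<^bsub>M\<^esub> b')"
    then obtain b' where "a' \<in> M1" "b' \<in> M2" "a \<oplus>\<^bsub>M\<^esub> b = a' \<oplus>\<^bsub>M\<^esub> b'" by blast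
    then show "a' = a" using uniq[of a a' b b'] that by simp
  qed
  have End: "\<pi> \<in> End_mod R M"
    unfolding End_mod_def
  proof (intro CollectI conjI ballI)
    fix x assume "x \<in> carrier M"
    then obtain a b where ab: "a \<in> M1" "b \<in> M2" "x = a \<oplus>\<^bsub>M\<^esub> b" using decomp by blast
    then show "\<pi> x \<in> carrier M" using pi c1 by simp
  next
    fix x y assume "x \<in> carrier M" "y \<in> carrier M"
    then obtain a b c d where ab: "a \<in> M1" "b \<in> M2" "x = a \<oplus>\<^bsub>M\<^esub> b"
      "c \<in> M1" "d \<in> M2" "y = c \<oplus>\<^bsub>M\<^esub> d" using decomp[of x] decomp[of y] by blast
    then have "x \<oplus>\<^bsub>M\<^esub> y = (a \<oplus>\<^bsub>M\<^esub> c) \<oplus>\<^bsub>M\<^esub> (b \<oplus>\<^bsub>M\<^esub> d)" using c1 c2 by (simp add: G.ag4)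
    moreover have "a \<oplus>\<^bsub>M\<^esub> c \<in> M1" "b \<oplus>\<^bsub>M\<^esub> d \<in> M2" using ab submodD(3)[OF s1] submodD(3)[OF s2] by auto
    ultimately show "\<pi> (x \<oplus>\<^bsub>M\<^esub> y) = \<pi> x \<oplus>\<^bsub>M\<^esub> \<pi> y" using pi ab by simp
  next
    fix r x assume r: "r \<in> carrier R" and "x \<in> carrier M"
    then obtain a b where ab: "a \<in> M1" "b \<in> M2" "x = a \<oplus>\<^bsub>M\<^esub> b" using decomp by blast
    then have "smult M r x = smult M r a \<oplus>\<^bsub>M\<^esub> smult M r b" using c1 c2 r by (simp add: rmoduleD(4)[OF rm])
    moreover have "smult M r a \<in> M1" "smult M r b \<in> M2" using ab submodD(5)[OF s1 r] submodD(5)[OF s2 r] by auto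
    ultimately show "\<pi> (smult M r x) = smult M r (\<pi> x)" using pi ab by simp
  qed
  have inv: "\<pi> ` N \<subseteq> N" using duo N End unfolding duo_module_def fully_invariant_def by blast
  show ?thesis
  proof
    fix n assume n: "n \<in> N"
    then obtain a b where ab: "a \<in> M1" "b \<in> M2" "n = a \<oplus>\<^bsub>M\<^esub> b" using decomp sub_carr[OF rm N] by blast
    have aN: "a \<in> N" using inv n pi ab by force
    have "b = \<ominus>\<^bsub>M\<^esub> a \<oplus>\<^bsub>M\<^esub> n" using ab c1 c2 by (simp add: G.r_neg1)
    then have "b \<in> N" using aN n submodD(3,4)[OF N] by simp
    then show "n \<in> (N \<inter> M1) <+>\<^bsub>M\<^esub> (N \<inter> M2)" using aN ab unfolding set_add_mem by blast
  qed
qed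

lemma P_dist: assumes dist: "distributive_module R M" and N: "submod R M N"
  shows "N \<subseteq> (N \<inter> M1) <+>\<^bsub>M\<^esub> (N \<inter> M2)"
proof
  fix n assume n: "n \<in> N"
  have nc: "n \<in> carrier M" using n sub_carr[OF rm N] by simp
  have N1: "submod R M (N \<inter> M1)" "submod R M (N \<inter> M2)" using int_submod[OF rm N s1] int_submod[OF rm N s2] by auto
  have law: "\<And>A B C. submod R M A \<Longrightarrow> submod R M B \<Longrightarrow> submod R M C \<Longrightarrow>
      A <+>\<^bsub>M\<^esub> (B \<inter> C) = (A <+>\<^bsub>M\<^esub> B) \<inter> (A <+>\<^bsub>M\<^esub> C)"
    using dist unfolding distributive_module_def by blast
  have n0: "n = \<zero>\<^bsub>M\<^esub> \<oplus>\<^bsub>M\<^esub> n" using nc by simp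
  have "n \<in> M2 <+>\<^bsub>M\<^esub> N" using n n0 submodD(2)[OF s2] unfolding set_add_mem by blast
  moreover have "M2 <+>\<^bsub>M\<^esub> M1 = M1 <+>\<^bsub>M\<^esub> M2" using set_add_comm[OF rm submodD(1)[OF s2] submodD(1)[OF s1]] .
  then have "n \<in> M2 <+>\<^bsub>M\<^esub> M1" using nc sm by simp
  ultimately have "n \<in> M2 <+>\<^bsub>M\<^esub> (N \<inter> M1)" using law[OF s2 N s1] by blast
  then obtain m u where mu: "m \<in> M2" "u \<in> N \<inter> M1" "n = m \<oplus>\<^bsub>M\<^esub> u" unfolding set_add_mem by blast
  then have "n = u \<oplus>\<^bsub>M\<^esub> m" using c1 c2 G.a_comm by auto
  then have "n \<in> (N \<inter> M1) <+>\<^bsub>M\<^esub> M2" using mu unfolding set_add_mem by blast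
  moreover have "\<zero>\<^bsub>M\<^esub> \<in> N \<inter> M1" using submodD(2)[OF N] submodD(2)[OF s1] by simp
  then have "n \<in> (N \<inter> M1) <+>\<^bsub>M\<^esub> N" using n n0 unfolding set_add_mem by blast
  ultimately show "n \<in> (N \<inter> M1) <+>\<^bsub>M\<^esub> (N \<inter> M2)" using law[OF N1(1) N s2] by blast
qed

end


context
  fixes R :: "('a, 'c) ring_scheme" and M :: "('a, 'm) module" and M1 M2 :: "'m set"
  assumes rm: "rmodule R M" and s1: "submod R M M1" and s2: "submod R M M2"
    and sm: "M1 <+>\<^bsub>M\<^esub> M2 = carrier M" and it: "M1 \<inter> M2 = {\<zero>\<^bsub>M\<^esub>}"
    and P: "\<And>N. submod R M N \<Longrightarrow> N \<subseteq> (N \<inter> M1) <+>\<^bsub>M\<^esub> (N \<inter> M2)"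
begin

interpretation G: abelian_group M using rmoduleD(2)[OF rm] .

lemma Pd: "submod R M N \<Longrightarrow> n \<in> N \<Longrightarrow> \<exists>a\<in>N \<inter> M1. \<exists>b\<in>N \<inter> M2. n = a \<oplus>\<^bsub>M\<^esub> b"
  using P unfolding set_add_mem[symmetric] by blast

lemma fwd: assumes H: "principally_goldie_star_lifting R M"
  shows "principally_goldie_star_lifting R (M\<lparr>carrier := M1\<rparr>)"
  unfolding principally_goldie_star_lifting_def
proof
  have rm1: "rmodule R (M\<lparr>carrier := M1\<rparr>)" by (rule restr_rmodule[OF rm s1])
  note cc1 = c1[OF rm s1 s2 sm it] and cc2 = c2[OF rm s1 s2 sm it]
  note pr1 = proj1[OF rm s1 s2 sm it] and dec = decomp[OF rm s1 s2 sm it]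
  fix x assume "x \<in> carrier (M\<lparr>carrier := M1\<rparr>)"
  then have x1: "x \<in> M1" by simp
  then have xc: "x \<in> carrier M" using sub_carr[OF rm s1] by simp
  define CX where "CX = cyclic_sub R M x"
  have CX: "submod R M CX" unfolding CX_def by (rule cyc_submod[OF rm xc])
  have X1: "CX \<subseteq> M1" unfolding CX_def by (rule cyc_sub[OF rm s1 x1])
  obtain D where dsD: "direct_summand R M D" and bs: "beta_star R M CX D"
    using H xc unfolding principally_goldie_star_lifting_def CX_def by blast
  obtain D' where D: "submod R M D" and D': "submod R M D'" and DD: "D <+>\<^bsub>M\<^esub> D' = carrier M"
    and DI: "D \<inter> D' = {\<zero>\<^bsub>M\<^esub>}" using dsD unfolding direct_summand_def by blast
  define D1 where "D1 = D \<inter> M1"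
  define D1' where "D1' = D' \<inter> M1"
  have sD1: "submod R M D1" "submod R M D1'" unfolding D1_def D1'_def
    using int_submod[OF rm D s1] int_submod[OF rm D' s1] by auto
  have D1M1: "D1 \<subseteq> M1" "D1' \<subseteq> M1" unfolding D1_def D1'_def by auto
  have sum1: "D1 <+>\<^bsub>M\<^esub> D1' = M1"
  proof (rule Set.set_eqI, rule iffI)
    fix m assume "m \<in> D1 <+>\<^bsub>M\<^esub> D1'"
    then show "m \<in> M1" using D1M1 submodD(3)[OF s1] unfolding set_add_mem by blast
  next
    fix m assume m: "m \<in> M1"
    then have "m \<in> D <+>\<^bsub>M\<^esub> D'" using DD cc1 by simp
    then obtain d d' where dd: "d \<in> D" "d' \<in> D'" "m = d \<oplus>\<^bsub>M\<^esub> d'" unfolding set_add_mem by blast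
    obtain d1 d2 where d: "d1 \<in> D \<inter> M1" "d2 \<in> D \<inter> M2" "d = d1 \<oplus>\<^bsub>M\<^esub> d2" using Pd[OF D dd(1)] by blast
    obtain e1 e2 where e: "e1 \<in> D' \<inter> M1" "e2 \<in> D' \<inter> M2" "d' = e1 \<oplus>\<^bsub>M\<^esub> e2" using Pd[OF D' dd(2)] by blast
    have "m = (d1 \<oplus>\<^bsub>M\<^esub> e1) \<oplus>\<^bsub>M\<^esub> (d2 \<oplus>\<^bsub>M\<^esub> e2)"
      using dd d e cc1 cc2 by (simp add: G.ag4)
    moreover have "d1 \<oplus>\<^bsub>M\<^esub> e1 \<in> M1" "d2 \<oplus>\<^bsub>M\<^esub> e2 \<in> M2"
      using d e submodD(3)[OF s1] submodD(3)[OF s2] by auto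
    ultimately have "m = d1 \<oplus>\<^bsub>M\<^esub> e1" using pr1 m by blast
    then show "m \<in> D1 <+>\<^bsub>M\<^esub> D1'" using d e unfolding set_add_mem D1_def D1'_def by blast
  qed
  have int1: "D1 \<inter> D1' = {\<zero>\<^bsub>M\<^esub>}" using DI submodD(2)[OF sD1(1)] submodD(2)[OF sD1(2)]
    unfolding D1_def D1'_def by blast
  have ds1: "direct_summand R (M\<lparr>carrier := M1\<rparr>) D1"
    unfolding direct_summand_def restr_submod[OF rm s1] set_add_restr
    using sD1 D1M1 sum1 int1 by auto
  have Hb: "\<forall>K. submod R M K \<longrightarrow> (CX <+>\<^bsub>M\<^esub> D) <+>\<^bsub>M\<^esub> K = carrier M \<longrightarrow>
            CX <+>\<^bsub>M\<^esub> K = carrier M \<and> D <+>\<^bsub>M\<^esub> K = carrier M"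
    using bs beta_char[OF rm CX D] by blast
  have "\<forall>K. submod R M K \<and> K \<subseteq> M1 \<longrightarrow> (CX <+>\<^bsub>M\<^esub> D1) <+>\<^bsub>M\<^esub> K = M1 \<longrightarrow>
            CX <+>\<^bsub>M\<^esub> K = M1 \<and> D1 <+>\<^bsub>M\<^esub> K = M1"
  proof (intro allI impI conjI)
    fix K assume KK: "submod R M K \<and> K \<subseteq> M1" and XDK: "(CX <+>\<^bsub>M\<^esub> D1) <+>\<^bsub>M\<^esub> K = M1"
    then have K: "submod R M K" and KM1: "K \<subseteq> M1" by auto
    define K' where "K' = K <+>\<^bsub>M\<^esub> M2"
    have K': "submod R M K'" unfolding K'_def by (rule sum_submod[OF rm K s2])
    have XD: "submod R M (CX <+>\<^bsub>M\<^esub> D)" by (rule sum_submod[OF rm CX D])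
    have "(CX <+>\<^bsub>M\<^esub> D) <+>\<^bsub>M\<^esub> K' = carrier M"
    proof (rule Set.set_eqI, rule iffI)
      fix m assume "m \<in> (CX <+>\<^bsub>M\<^esub> D) <+>\<^bsub>M\<^esub> K'"
      then show "m \<in> carrier M" using submodD(1)[OF sum_submod[OF rm XD K']] by blast
    next
      fix m assume "m \<in> carrier M"
      then obtain m1 m2 where mm: "m1 \<in> M1" "m2 \<in> M2" "m = m1 \<oplus>\<^bsub>M\<^esub> m2" using dec by blast
      then have "m1 \<in> (CX <+>\<^bsub>M\<^esub> D1) <+>\<^bsub>M\<^esub> K" using XDK by simp
      then obtain y d k where ydk: "y \<in> CX" "d \<in> D1" "k \<in> K" "m1 = (y \<oplus>\<^bsub>M\<^esub> d) \<oplus>\<^bsub>M\<^esub> k"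
        by (auto simp: set_add_mem)
      have yc: "y \<in> carrier M" "d \<in> carrier M" "k \<in> carrier M"
        using ydk X1 D1M1 KM1 cc1 by auto
      have "m = (y \<oplus>\<^bsub>M\<^esub> d) \<oplus>\<^bsub>M\<^esub> (k \<oplus>\<^bsub>M\<^esub> m2)" using mm ydk yc cc2 by (simp add: G.a_assoc)
      moreover have "y \<oplus>\<^bsub>M\<^esub> d \<in> CX <+>\<^bsub>M\<^esub> D" using ydk unfolding set_add_mem D1_def by blast
      moreover have "k \<oplus>\<^bsub>M\<^esub> m2 \<in> K'" using ydk mm unfolding set_add_mem K'_def by blast
      ultimately show "m \<in> (CX <+>\<^bsub>M\<^esub> D) <+>\<^bsub>M\<^esub> K'" by (blast intro: set_add_memI)
    qed
    then have XK': "CX <+>\<^bsub>M\<^esub> K' = carrier M" and DK': "D <+>\<^bsub>M\<^esub> K' = carrier M"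
      using Hb K' by auto
    show "CX <+>\<^bsub>M\<^esub> K = M1"
    proof (rule Set.set_eqI, rule iffI)
      fix m assume "m \<in> CX <+>\<^bsub>M\<^esub> K"
      then show "m \<in> M1" using X1 KM1 submodD(3)[OF s1] unfolding set_add_mem by blast
    next
      fix m assume m: "m \<in> M1"
      then have "m \<in> CX <+>\<^bsub>M\<^esub> K'" using XK' cc1 by simp
      then obtain y k m2 where ykm: "y \<in> CX" "k \<in> K" "m2 \<in> M2" "m = y \<oplus>\<^bsub>M\<^esub> (k \<oplus>\<^bsub>M\<^esub> m2)"
        by (auto simp: set_add_mem K'_def)
      have ykc: "y \<in> carrier M" "k \<in> carrier M" "m2 \<in> carrier M" using ykm X1 KM1 cc1 cc2 by blast+
      have "m = (y \<oplus>\<^bsub>M\<^esub> k) \<oplus>\<^bsub>M\<^esub> m2" using ykm(4) ykc by (simp add: G.a_assoc)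
      moreover have "y \<oplus>\<^bsub>M\<^esub> k \<in> M1" using ykm X1 KM1 submodD(3)[OF s1] by blast
      ultimately have "m = y \<oplus>\<^bsub>M\<^esub> k" using pr1 m ykm by blast
      then show "m \<in> CX <+>\<^bsub>M\<^esub> K" using ykm unfolding set_add_mem by blast
    qed
    show "D1 <+>\<^bsub>M\<^esub> K = M1"
    proof (rule Set.set_eqI, rule iffI)
      fix m assume "m \<in> D1 <+>\<^bsub>M\<^esub> K"
      then show "m \<in> M1" using D1M1 KM1 submodD(3)[OF s1] unfolding set_add_mem by blast
    next
      fix m assume m: "m \<in> M1"
      then have "m \<in> D <+>\<^bsub>M\<^esub> K'" using DK' cc1 by simp
      then obtain d k m2 where dkm: "d \<in> D" "k \<in> K" "m2 \<in> M2" "m = d \<oplus>\<^bsub>M\<^esub> (k \<oplus>\<^bsub>M\<^esub> m2)"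
        by (auto simp: set_add_mem K'_def)
      obtain d1 d2 where d: "d1 \<in> D \<inter> M1" "d2 \<in> D \<inter> M2" "d = d1 \<oplus>\<^bsub>M\<^esub> d2" using Pd[OF D dkm(1)] by blast
      have dkc: "d1 \<in> carrier M" "d2 \<in> carrier M" "k \<in> carrier M" "m2 \<in> carrier M"
        using dkm d KM1 cc1 cc2 by blast+
      have "m = (d1 \<oplus>\<^bsub>M\<^esub> k) \<oplus>\<^bsub>M\<^esub> (d2 \<oplus>\<^bsub>M\<^esub> m2)" using dkm(4) d(3) dkc by (simp add: G.ag4)
      moreover have "d1 \<oplus>\<^bsub>M\<^esub> k \<in> M1" "d2 \<oplus>\<^bsub>M\<^esub> m2 \<in> M2"
        using dkm d KM1 submodD(3)[OF s1] submodD(3)[OF s2] by auto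
      ultimately have "m = d1 \<oplus>\<^bsub>M\<^esub> k" using pr1 m by blast
      then show "m \<in> D1 <+>\<^bsub>M\<^esub> K" using d dkm unfolding set_add_mem D1_def by blast
    qed
  qed
  moreover have sX1: "submod R (M\<lparr>carrier := M1\<rparr>) CX" using restr_submod[OF rm s1] CX X1 by simp
  moreover have sDD1: "submod R (M\<lparr>carrier := M1\<rparr>) D1" using restr_submod[OF rm s1] sD1 D1M1 by simp
  ultimately have bs1: "beta_star R (M\<lparr>carrier := M1\<rparr>) CX D1"
    using beta_char[OF rm1 sX1 sDD1] by (simp add: restr_submod[OF rm s1] set_add_restr)
  show "\<exists>D. direct_summand R (M\<lparr>carrier := M1\<rparr>) D \<and>
          beta_star R (M\<lparr>carrier := M1\<rparr>) (cyclic_sub R (M\<lparr>carrier := M1\<rparr>) x) D"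
    using ds1 bs1 unfolding cyclic_restr CX_def by blast
qed


lemma ds_restr: assumes S: "submod R M S" and ds: "direct_summand R (M\<lparr>carrier := S\<rparr>) D"
  shows "submod R M D \<and> D \<subseteq> S \<and> (\<exists>D'. submod R M D' \<and> D' \<subseteq> S \<and> D <+>\<^bsub>M\<^esub> D' = S \<and> D \<inter> D' = {\<zero>\<^bsub>M\<^esub>})"
  using ds unfolding direct_summand_def restr_submod[OF rm S] set_add_restr by simp

lemma bs_restr: assumes S: "submod R M S" and A: "submod R M A" "A \<subseteq> S" and B: "submod R M B" "B \<subseteq> S"
  and bs: "beta_star R (M\<lparr>carrier := S\<rparr>) A B"
  shows "\<forall>K. submod R M K \<and> K \<subseteq> S \<longrightarrow> (A <+>\<^bsub>M\<^esub> B) <+>\<^bsub>M\<^esub> K = S \<longrightarrow>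
            A <+>\<^bsub>M\<^esub> K = S \<and> B <+>\<^bsub>M\<^esub> K = S"
proof -
  have rmS: "rmodule R (M\<lparr>carrier := S\<rparr>)" by (rule restr_rmodule[OF rm S])
  have sA: "submod R (M\<lparr>carrier := S\<rparr>) A" using restr_submod[OF rm S] A by simp
  have sB: "submod R (M\<lparr>carrier := S\<rparr>) B" using restr_submod[OF rm S] B by simp
  show ?thesis using beta_char[OF rmS sA sB] bs by (simp add: restr_submod[OF rm S] set_add_restr)
qed

lemma bwd: assumes H1: "principally_goldie_star_lifting R (M\<lparr>carrier := M1\<rparr>)"
  and H2: "principally_goldie_star_lifting R (M\<lparr>carrier := M2\<rparr>)"
  shows "principally_goldie_star_lifting R M"
  unfolding principally_goldie_star_lifting_def
proof
  note cc1 = c1[OF rm s1 s2 sm it] and cc2 = c2[OF rm s1 s2 sm it]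
  note pr1 = proj1[OF rm s1 s2 sm it] and pr2 = proj2[OF rm s1 s2 sm it]
  note dec = decomp[OF rm s1 s2 sm it] and un = uniq[OF rm s1 s2 sm it]
  fix x assume xc: "x \<in> carrier M"
  obtain x1 x2 where xx: "x1 \<in> M1" "x2 \<in> M2" "x = x1 \<oplus>\<^bsub>M\<^esub> x2" using dec[OF xc] by blast
  have xc12: "x1 \<in> carrier M" "x2 \<in> carrier M" using xx cc1 cc2 by auto
  define CX where "CX = cyclic_sub R M x"
  define CX1 where "CX1 = cyclic_sub R M x1"
  define CX2 where "CX2 = cyclic_sub R M x2"
  have sCX: "submod R M CX" "submod R M CX1" "submod R M CX2"
    unfolding CX_def CX1_def CX2_def using cyc_submod[OF rm] xc xc12 by auto
  have X1M1: "CX1 \<subseteq> M1" unfolding CX1_def by (rule cyc_sub[OF rm s1 xx(1)])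
  have X2M2: "CX2 \<subseteq> M2" unfolding CX2_def by (rule cyc_sub[OF rm s2 xx(2)])
  have xin: "x \<in> CX" unfolding CX_def by (rule cyc_self[OF rm xc])
  obtain a b where ab: "a \<in> CX \<inter> M1" "b \<in> CX \<inter> M2" "x = a \<oplus>\<^bsub>M\<^esub> b" using Pd[OF sCX(1) xin] by blast
  have "a = x1 \<and> b = x2" using un[of a x1 b x2] ab xx by auto
  then have x12: "x1 \<in> CX" "x2 \<in> CX" using ab by auto
  have CX12: "CX1 \<subseteq> CX" "CX2 \<subseteq> CX" unfolding CX1_def CX2_def using cyc_sub[OF rm sCX(1)] x12 by auto
  have CXsub: "CX \<subseteq> CX1 <+>\<^bsub>M\<^esub> CX2"
  proof
    fix y assume "y \<in> CX"
    then obtain r where r: "r \<in> carrier R" "y = smult M r x" unfolding CX_def cyclic_sub_def by blast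
    then have "y = smult M r x1 \<oplus>\<^bsub>M\<^esub> smult M r x2" using xx xc12 rmoduleD(4)[OF rm] by simp
    moreover have "smult M r x1 \<in> CX1" "smult M r x2 \<in> CX2" unfolding CX1_def CX2_def cyclic_sub_def using r by auto
    ultimately show "y \<in> CX1 <+>\<^bsub>M\<^esub> CX2" by (blast intro: set_add_memI)
  qed
  obtain D1 where ds1: "direct_summand R (M\<lparr>carrier := M1\<rparr>) D1"
    and bs1: "beta_star R (M\<lparr>carrier := M1\<rparr>) CX1 D1"
    using H1 xx(1) unfolding principally_goldie_star_lifting_def cyclic_restr CX1_def by auto
  obtain D2 where ds2: "direct_summand R (M\<lparr>carrier := M2\<rparr>) D2"
    and bs2: "beta_star R (M\<lparr>carrier := M2\<rparr>) CX2 D2"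
    using H2 xx(2) unfolding principally_goldie_star_lifting_def cyclic_restr CX2_def by auto
  obtain D1' where D1: "submod R M D1" "D1 \<subseteq> M1" "submod R M D1'" "D1' \<subseteq> M1"
    "D1 <+>\<^bsub>M\<^esub> D1' = M1" "D1 \<inter> D1' = {\<zero>\<^bsub>M\<^esub>}" using ds_restr[OF s1 ds1] by blast
  obtain D2' where D2: "submod R M D2" "D2 \<subseteq> M2" "submod R M D2'" "D2' \<subseteq> M2"
    "D2 <+>\<^bsub>M\<^esub> D2' = M2" "D2 \<inter> D2' = {\<zero>\<^bsub>M\<^esub>}" using ds_restr[OF s2 ds2] by blast
  have H1b: "\<forall>K. submod R M K \<and> K \<subseteq> M1 \<longrightarrow> (CX1 <+>\<^bsub>M\<^esub> D1) <+>\<^bsub>M\<^esub> K = M1 \<longrightarrow>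
            CX1 <+>\<^bsub>M\<^esub> K = M1 \<and> D1 <+>\<^bsub>M\<^esub> K = M1"
    by (rule bs_restr[OF s1 sCX(2) X1M1 D1(1,2) bs1])
  have H2b: "\<forall>K. submod R M K \<and> K \<subseteq> M2 \<longrightarrow> (CX2 <+>\<^bsub>M\<^esub> D2) <+>\<^bsub>M\<^esub> K = M2 \<longrightarrow>
            CX2 <+>\<^bsub>M\<^esub> K = M2 \<and> D2 <+>\<^bsub>M\<^esub> K = M2"
    by (rule bs_restr[OF s2 sCX(3) X2M2 D2(1,2) bs2])
  define D where "D = D1 <+>\<^bsub>M\<^esub> D2"
  define D' where "D' = D1' <+>\<^bsub>M\<^esub> D2'"
  have sD: "submod R M D" "submod R M D'" unfolding D_def D'_def using sum_submod[OF rm] D1 D2 by auto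
  have DD: "D <+>\<^bsub>M\<^esub> D' = carrier M"
  proof (rule Set.set_eqI, rule iffI)
    fix m assume "m \<in> D <+>\<^bsub>M\<^esub> D'"
    then show "m \<in> carrier M" using submodD(1)[OF sum_submod[OF rm sD]] by blast
  next
    fix m assume "m \<in> carrier M"
    then obtain m1 m2 where mm: "m1 \<in> M1" "m2 \<in> M2" "m = m1 \<oplus>\<^bsub>M\<^esub> m2" using dec by blast
    obtain d1 e1 where de1: "d1 \<in> D1" "e1 \<in> D1'" "m1 = d1 \<oplus>\<^bsub>M\<^esub> e1"
      using mm D1(5)[symmetric] set_add_mem[of m1 M D1 D1'] by auto
    obtain d2 e2 where de2: "d2 \<in> D2" "e2 \<in> D2'" "m2 = d2 \<oplus>\<^bsub>M\<^esub> e2"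
      using mm D2(5)[symmetric] set_add_mem[of m2 M D2 D2'] by auto
    have dc: "d1 \<in> carrier M" "e1 \<in> carrier M" "d2 \<in> carrier M" "e2 \<in> carrier M"
      using de1 de2 D1 D2 cc1 cc2 by blast+
    have "m = (d1 \<oplus>\<^bsub>M\<^esub> d2) \<oplus>\<^bsub>M\<^esub> (e1 \<oplus>\<^bsub>M\<^esub> e2)" using mm(3) de1(3) de2(3) dc by (simp add: G.ag4)
    moreover have "d1 \<oplus>\<^bsub>M\<^esub> d2 \<in> D" "e1 \<oplus>\<^bsub>M\<^esub> e2 \<in> D'" unfolding D_def D'_def using de1 de2 by (blast intro: set_add_memI)+
    ultimately show "m \<in> D <+>\<^bsub>M\<^esub> D'" by (blast intro: set_add_memI)
  qed
  have DI: "D \<inter> D' = {\<zero>\<^bsub>M\<^esub>}"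
  proof
    show "D \<inter> D' \<subseteq> {\<zero>\<^bsub>M\<^esub>}"
    proof
      fix y assume "y \<in> D \<inter> D'"
      then obtain d1 d2 e1 e2 where de: "d1 \<in> D1" "d2 \<in> D2" "e1 \<in> D1'" "e2 \<in> D2'"
        "y = d1 \<oplus>\<^bsub>M\<^esub> d2" "y = e1 \<oplus>\<^bsub>M\<^esub> e2" unfolding D_def D'_def by (auto simp: set_add_mem)
      have mem: "d1 \<in> M1" "e1 \<in> M1" "d2 \<in> M2" "e2 \<in> M2"
        using subsetD[OF D1(2) de(1)] subsetD[OF D1(4) de(3)] subsetD[OF D2(2) de(2)] subsetD[OF D2(4) de(4)] by simp_all
      have "d1 \<oplus>\<^bsub>M\<^esub> d2 = e1 \<oplus>\<^bsub>M\<^esub> e2" using de(5,6) by simp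
      then have "d1 = e1 \<and> d2 = e2" using un[OF mem] by blast
      then have "d1 = \<zero>\<^bsub>M\<^esub>" "d2 = \<zero>\<^bsub>M\<^esub>" using de D1(6) D2(6) by auto
      then show "y \<in> {\<zero>\<^bsub>M\<^esub>}" using de by simp
    qed
    have "\<zero>\<^bsub>M\<^esub> = \<zero>\<^bsub>M\<^esub> \<oplus>\<^bsub>M\<^esub> \<zero>\<^bsub>M\<^esub>" by simp
    then show "{\<zero>\<^bsub>M\<^esub>} \<subseteq> D \<inter> D'" unfolding D_def D'_def
      using submodD(2)[OF D1(1)] submodD(2)[OF D1(3)] submodD(2)[OF D2(1)] submodD(2)[OF D2(3)]
      by (blast intro: set_add_memI)
  qed
  have ds: "direct_summand R M D" unfolding direct_summand_def using sD DD DI by blast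
  have "\<forall>K. submod R M K \<longrightarrow> (CX <+>\<^bsub>M\<^esub> D) <+>\<^bsub>M\<^esub> K = carrier M \<longrightarrow>
            CX <+>\<^bsub>M\<^esub> K = carrier M \<and> D <+>\<^bsub>M\<^esub> K = carrier M"
  proof (intro allI impI)
    fix K assume K: "submod R M K" and XDK: "(CX <+>\<^bsub>M\<^esub> D) <+>\<^bsub>M\<^esub> K = carrier M"
    define K1 where "K1 = K \<inter> M1"
    define K2 where "K2 = K \<inter> M2"
    have sK: "submod R M K1" "submod R M K2" unfolding K1_def K2_def using int_submod[OF rm K] s1 s2 by auto
    have KM: "K1 \<subseteq> M1" "K2 \<subseteq> M2" unfolding K1_def K2_def by auto
    have split: "\<exists>a1 d1 k1 a2 d2 k2. a1 \<in> CX1 \<and> d1 \<in> D1 \<and> k1 \<in> K1 \<and> a2 \<in> CX2 \<and> d2 \<in> D2 \<and> k2 \<in> K2 \<and>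
        m = ((a1 \<oplus>\<^bsub>M\<^esub> d1) \<oplus>\<^bsub>M\<^esub> k1) \<oplus>\<^bsub>M\<^esub> ((a2 \<oplus>\<^bsub>M\<^esub> d2) \<oplus>\<^bsub>M\<^esub> k2)" if m: "m \<in> carrier M" for m
    proof -
      have "m \<in> (CX <+>\<^bsub>M\<^esub> D) <+>\<^bsub>M\<^esub> K" using m XDK by simp
      then obtain y d k where ydk: "y \<in> CX" "d \<in> D" "k \<in> K" "m = (y \<oplus>\<^bsub>M\<^esub> d) \<oplus>\<^bsub>M\<^esub> k"
        by (auto simp: set_add_mem)
      obtain a1 a2 where a: "a1 \<in> CX1" "a2 \<in> CX2" "y = a1 \<oplus>\<^bsub>M\<^esub> a2" using subsetD[OF CXsub ydk(1)] unfolding set_add_mem by blast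
      obtain d1 d2 where dd: "d1 \<in> D1" "d2 \<in> D2" "d = d1 \<oplus>\<^bsub>M\<^esub> d2" using ydk(2) unfolding D_def set_add_mem by blast
      obtain k1 k2 where kk: "k1 \<in> K1" "k2 \<in> K2" "k = k1 \<oplus>\<^bsub>M\<^esub> k2" using Pd[OF K ydk(3)] unfolding K1_def K2_def by blast
      have cs: "a1 \<in> carrier M" "a2 \<in> carrier M" "d1 \<in> carrier M" "d2 \<in> carrier M" "k1 \<in> carrier M" "k2 \<in> carrier M"
        using cc1[OF subsetD[OF X1M1 a(1)]] cc2[OF subsetD[OF X2M2 a(2)]]
          cc1[OF subsetD[OF D1(2) dd(1)]] cc2[OF subsetD[OF D2(2) dd(2)]]
          cc1[OF subsetD[OF KM(1) kk(1)]] cc2[OF subsetD[OF KM(2) kk(2)]] by simp_all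
      have "m = ((a1 \<oplus>\<^bsub>M\<^esub> d1) \<oplus>\<^bsub>M\<^esub> k1) \<oplus>\<^bsub>M\<^esub> ((a2 \<oplus>\<^bsub>M\<^esub> d2) \<oplus>\<^bsub>M\<^esub> k2)"
        using ydk(4) a(3) dd(3) kk(3) G.ag9[OF cs] by simp
      then show ?thesis using a(1,2) dd(1,2) kk(1,2) by blast
    qed
    have in1: "(a1 \<oplus>\<^bsub>M\<^esub> d1) \<oplus>\<^bsub>M\<^esub> k1 \<in> M1" if "a1 \<in> CX1" "d1 \<in> D1" "k1 \<in> K1" for a1 d1 k1
    proof -
      have "a1 \<in> M1" "d1 \<in> M1" "k1 \<in> M1" using subsetD[OF X1M1 that(1)] subsetD[OF D1(2) that(2)] subsetD[OF KM(1) that(3)] by simp_all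
      then show ?thesis using submodD(3)[OF s1] by simp
    qed
    have in2: "(a2 \<oplus>\<^bsub>M\<^esub> d2) \<oplus>\<^bsub>M\<^esub> k2 \<in> M2" if "a2 \<in> CX2" "d2 \<in> D2" "k2 \<in> K2" for a2 d2 k2
    proof -
      have "a2 \<in> M2" "d2 \<in> M2" "k2 \<in> M2" using subsetD[OF X2M2 that(1)] subsetD[OF D2(2) that(2)] subsetD[OF KM(2) that(3)] by simp_all
      then show ?thesis using submodD(3)[OF s2] by simp
    qed
    have E1: "(CX1 <+>\<^bsub>M\<^esub> D1) <+>\<^bsub>M\<^esub> K1 = M1"
    proof (rule Set.set_eqI, rule iffI)
      fix m assume "m \<in> (CX1 <+>\<^bsub>M\<^esub> D1) <+>\<^bsub>M\<^esub> K1"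
      then have "\<exists>u\<in>CX1 <+>\<^bsub>M\<^esub> D1. \<exists>k1\<in>K1. m = u \<oplus>\<^bsub>M\<^esub> k1" by (simp only: set_add_mem)
      then obtain u k1 where uk: "u \<in> CX1 <+>\<^bsub>M\<^esub> D1" "k1 \<in> K1" "m = u \<oplus>\<^bsub>M\<^esub> k1" by blast
      from uk(1) obtain a1 d1 where ad: "a1 \<in> CX1" "d1 \<in> D1" "u = a1 \<oplus>\<^bsub>M\<^esub> d1" unfolding set_add_mem by blast
      have "m = (a1 \<oplus>\<^bsub>M\<^esub> d1) \<oplus>\<^bsub>M\<^esub> k1" using uk(3) ad(3) by simp
      then show "m \<in> M1" using in1[OF ad(1,2) uk(2)] by simp
    next
      fix m assume m: "m \<in> M1"
      then obtain a1 d1 k1 a2 d2 k2 where s: "a1 \<in> CX1" "d1 \<in> D1" "k1 \<in> K1" "a2 \<in> CX2" "d2 \<in> D2" "k2 \<in> K2"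
        "m = ((a1 \<oplus>\<^bsub>M\<^esub> d1) \<oplus>\<^bsub>M\<^esub> k1) \<oplus>\<^bsub>M\<^esub> ((a2 \<oplus>\<^bsub>M\<^esub> d2) \<oplus>\<^bsub>M\<^esub> k2)"
        using split[OF cc1[OF m]] by blast
      then have me: "m = (a1 \<oplus>\<^bsub>M\<^esub> d1) \<oplus>\<^bsub>M\<^esub> k1" using pr1[OF m in1[OF s(1-3)] in2[OF s(4-6)] s(7)] by simp
      have "a1 \<oplus>\<^bsub>M\<^esub> d1 \<in> CX1 <+>\<^bsub>M\<^esub> D1" by (rule set_add_memI[OF s(1) s(2) refl])
      then show "m \<in> (CX1 <+>\<^bsub>M\<^esub> D1) <+>\<^bsub>M\<^esub> K1" by (rule set_add_memI[OF _ s(3) me])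
    qed
    have E2: "(CX2 <+>\<^bsub>M\<^esub> D2) <+>\<^bsub>M\<^esub> K2 = M2"
    proof (rule Set.set_eqI, rule iffI)
      fix m assume "m \<in> (CX2 <+>\<^bsub>M\<^esub> D2) <+>\<^bsub>M\<^esub> K2"
      then have "\<exists>u\<in>CX2 <+>\<^bsub>M\<^esub> D2. \<exists>k2\<in>K2. m = u \<oplus>\<^bsub>M\<^esub> k2" by (simp only: set_add_mem)
      then obtain u k2 where uk: "u \<in> CX2 <+>\<^bsub>M\<^esub> D2" "k2 \<in> K2" "m = u \<oplus>\<^bsub>M\<^esub> k2" by blast
      from uk(1) obtain a2 d2 where ad: "a2 \<in> CX2" "d2 \<in> D2" "u = a2 \<oplus>\<^bsub>M\<^esub> d2" unfolding set_add_mem by blast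
      have "m = (a2 \<oplus>\<^bsub>M\<^esub> d2) \<oplus>\<^bsub>M\<^esub> k2" using uk(3) ad(3) by simp
      then show "m \<in> M2" using in2[OF ad(1,2) uk(2)] by simp
    next
      fix m assume m: "m \<in> M2"
      then obtain a1 d1 k1 a2 d2 k2 where s: "a1 \<in> CX1" "d1 \<in> D1" "k1 \<in> K1" "a2 \<in> CX2" "d2 \<in> D2" "k2 \<in> K2"
        "m = ((a1 \<oplus>\<^bsub>M\<^esub> d1) \<oplus>\<^bsub>M\<^esub> k1) \<oplus>\<^bsub>M\<^esub> ((a2 \<oplus>\<^bsub>M\<^esub> d2) \<oplus>\<^bsub>M\<^esub> k2)"
        using split[OF cc2[OF m]] by blast
      then have me: "m = (a2 \<oplus>\<^bsub>M\<^esub> d2) \<oplus>\<^bsub>M\<^esub> k2" using pr2[OF m in1[OF s(1-3)] in2[OF s(4-6)] s(7)] by simp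
      have "a2 \<oplus>\<^bsub>M\<^esub> d2 \<in> CX2 <+>\<^bsub>M\<^esub> D2" by (rule set_add_memI[OF s(4) s(5) refl])
      then show "m \<in> (CX2 <+>\<^bsub>M\<^esub> D2) <+>\<^bsub>M\<^esub> K2" by (rule set_add_memI[OF _ s(6) me])
    qed
    have F1: "CX1 <+>\<^bsub>M\<^esub> K1 = M1" "D1 <+>\<^bsub>M\<^esub> K1 = M1" using H1b sK(1) KM(1) E1 by auto
    have F2: "CX2 <+>\<^bsub>M\<^esub> K2 = M2" "D2 <+>\<^bsub>M\<^esub> K2 = M2" using H2b sK(2) KM(2) E2 by auto
    have gen: "A <+>\<^bsub>M\<^esub> K = carrier M"
      if A: "submod R M A" and A1: "A1 <+>\<^bsub>M\<^esub> K1 = M1" and A2: "A2 <+>\<^bsub>M\<^esub> K2 = M2"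
        and A1s: "A1 \<subseteq> M1" and A2s: "A2 \<subseteq> M2"
        and AA: "\<And>u v. u \<in> A1 \<Longrightarrow> v \<in> A2 \<Longrightarrow> u \<oplus>\<^bsub>M\<^esub> v \<in> A" for A A1 A2
    proof (rule Set.set_eqI, rule iffI)
      fix m assume "m \<in> A <+>\<^bsub>M\<^esub> K"
      then show "m \<in> carrier M" using submodD(1)[OF sum_submod[OF rm A K]] by blast
    next
      fix m assume "m \<in> carrier M"
      then obtain m1 m2 where mm: "m1 \<in> M1" "m2 \<in> M2" "m = m1 \<oplus>\<^bsub>M\<^esub> m2" using dec by blast
      obtain u k1 where uk: "u \<in> A1" "k1 \<in> K1" "m1 = u \<oplus>\<^bsub>M\<^esub> k1"
        using mm(1) A1[symmetric] set_add_mem[of m1 M A1 K1] by auto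
      obtain v k2 where vk: "v \<in> A2" "k2 \<in> K2" "m2 = v \<oplus>\<^bsub>M\<^esub> k2"
        using mm(2) A2[symmetric] set_add_mem[of m2 M A2 K2] by auto
      have cs: "u \<in> carrier M" "k1 \<in> carrier M" "v \<in> carrier M" "k2 \<in> carrier M"
        using cc1[OF subsetD[OF A1s uk(1)]] cc1[OF subsetD[OF KM(1) uk(2)]]
          cc2[OF subsetD[OF A2s vk(1)]] cc2[OF subsetD[OF KM(2) vk(2)]] by simp_all
      have "m = (u \<oplus>\<^bsub>M\<^esub> v) \<oplus>\<^bsub>M\<^esub> (k1 \<oplus>\<^bsub>M\<^esub> k2)" using mm(3) uk(3) vk(3) cs by (simp add: G.ag4)
      moreover have "k1 \<oplus>\<^bsub>M\<^esub> k2 \<in> K" using uk vk submodD(3)[OF K] unfolding K1_def K2_def by blast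
      ultimately show "m \<in> A <+>\<^bsub>M\<^esub> K" using AA uk vk by (blast intro: set_add_memI)
    qed
    have "CX <+>\<^bsub>M\<^esub> K = carrier M"
      by (rule gen[OF sCX(1) F1(1) F2(1) X1M1 X2M2]) (use CX12 submodD(3)[OF sCX(1)] in blast)
    moreover have "D <+>\<^bsub>M\<^esub> K = carrier M"
      by (rule gen[OF sD(1) F1(2) F2(2) D1(2) D2(2)]) (unfold D_def, blast intro: set_add_memI)
    ultimately show "CX <+>\<^bsub>M\<^esub> K = carrier M \<and> D <+>\<^bsub>M\<^esub> K = carrier M" by blast
  qed
  then have "beta_star R M CX D" using beta_char[OF rm sCX(1) sD(1)] by blast
  then show "\<exists>D. direct_summand R M D \<and> beta_star R M (cyclic_sub R M x) D" using ds unfolding CX_def by blast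
qed

end


theorem proposition3p8:
  fixes R :: "('a, 'c) ring_scheme" and M :: "('a, 'm) module" and M1 M2 :: "'m set"
  assumes "rmodule R M"
    and "submod R M M1" and "submod R M M2"
    and "M1 <+>\<^bsub>M\<^esub> M2 = carrier M" and "M1 \<inter> M2 = {\<zero>\<^bsub>M\<^esub>}"
    and "duo_module R M \<or> distributive_module R M"
  shows "principally_goldie_star_lifting R M \<longleftrightarrow>
           principally_goldie_star_lifting R (submodule_as_module M M1) \<and>
           principally_goldie_star_lifting R (submodule_as_module M M2)"
proof -
  have P: "\<And>N. submod R M N \<Longrightarrow> N \<subseteq> (N \<inter> M1) <+>\<^bsub>M\<^esub> (N \<inter> M2)"
    using assms(6) P_duo[OF assms(1-5)] P_dist[OF assms(1-5)] by blast
  have sm': "M2 <+>\<^bsub>M\<^esub> M1 = carrier M"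
    using set_add_comm[OF assms(1) submodD(1)[OF assms(3)] submodD(1)[OF assms(2)]] assms(4) by simp
  have it': "M2 \<inter> M1 = {\<zero>\<^bsub>M\<^esub>}" using assms(5) by blast
  have P': "N \<subseteq> (N \<inter> M2) <+>\<^bsub>M\<^esub> (N \<inter> M1)" if N: "submod R M N" for N
  proof -
    have "(N \<inter> M1) <+>\<^bsub>M\<^esub> (N \<inter> M2) = (N \<inter> M2) <+>\<^bsub>M\<^esub> (N \<inter> M1)"
      using set_add_comm[OF assms(1), of "N \<inter> M1" "N \<inter> M2"] submodD(1)[OF N] by blast
    then show ?thesis using P[OF N] by simp
  qed
  have f1: "principally_goldie_star_lifting R M \<Longrightarrow> principally_goldie_star_lifting R (M\<lparr>carrier := M1\<rparr>)"
    by (rule fwd[OF assms(1-5) P])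
  have f2: "principally_goldie_star_lifting R M \<Longrightarrow> principally_goldie_star_lifting R (M\<lparr>carrier := M2\<rparr>)"
    by (rule fwd[OF assms(1) assms(3) assms(2) sm' it' P'])
  have b: "principally_goldie_star_lifting R (M\<lparr>carrier := M1\<rparr>) \<Longrightarrow>
      principally_goldie_star_lifting R (M\<lparr>carrier := M2\<rparr>) \<Longrightarrow> principally_goldie_star_lifting R M"
    by (rule bwd[OF assms(1-5) P])
  show ?thesis using f1 f2 b by blast
qed

end
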